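(* Let $\nu=\sum_{k=1}^K p^{(k)}\nu^{(k)}$ be a mixture model on $\mathbb{R}^d$ satisfying the standing assumptions below, and suppose there is $\beta\in\mathbb{R}$ such that for all $i\in[d]$, $$\beta\cdot \mathbb{E}_{x\sim\nu}\big[|x_i-\mu_i(x)|\big]\ \ge\ \sqrt{\mathbb{E}_{x\sim\nu}\big[|x_i-\mu_i(x)|^2\big]}.$$ Let $q=ENR(\nu)$. Then there exists a decision tree $T$ (in the sense defined below) such that $$Price(\nu,T)\ \le\ 1+\frac{(4+2\pi^2/3)\,\alpha\beta K(K-1)}{\sqrt{q}}$$ (the right-hand side being read as $+\infty$ if $q=0$).
   Context: Standing assumptions: $\nu=\sum_{k=1}^K p^{(k)}\nu^{(k)}$ with $\sum_k p^{(k)}=1$, where each $\nu^{(k)}$ is a discrete or absolutely continuous probability distribution on $\mathbb{R}^d$ with mean $\mu^{(k)}\in\mathbb{R}^d$, whose density or probability mass function is symmetric about $\mu^{(k)}$ (so mean and median coincide). Every component has the same finite coordinate-wise variances $\sigma_1^2,\dots,\sigma_d^2>0$ (i.e. $\mathrm{Var}_{x\sim\nu^{(k)}}(x_j)=\sigma_j^2$ for all $k,j$). The mixing weights satisfy $p^{(k)}\le\alpha/K$ for all $k$, for some fixed $\alpha\ge1$. Sampling $x\sim\nu$ means first drawing a component $k$ with probability $p^{(k)}$ and then $x\sim\nu^{(k)}$; we set $\mu(x)=\mu^{(k)}$ for that component. Explainability-to-noise ratio: $ENR(\nu)=\min_{k\ne l}\max_{j\in[d]}|\mu^{(k)}_j-\mu^{(l)}_j|^2/\sigma_j^2$.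 A decision tree is a binary tree with $K$ leaves in which every internal node splits by an axis-aligned threshold cut $x_i\le\theta$ vs. $x_i>\theta$ (some $i\in[d]$, $\theta\in\mathbb{R}$), so that the leaves partition $\mathbb{R}^d$, and such that each leaf contains exactly one of the means $\mu^{(1)},\dots,\mu^{(K)}$. For $x$, let $\tilde\mu(x)$ be a median of the leaf containing $x$, i.e. a minimizer $c$ of $\mathbb{E}[\|x'-c\|_1\mid x' \text{ in that leaf}]$, $x'\sim\nu$ (a coordinate-wise median of $\nu$ restricted to the leaf). The price of explainability is $$Price(\nu,T)=\frac{\mathbb{E}_{x\sim\nu}[\|x-\tilde\mu(x)\|_1]}{\mathbb{E}_{x\sim\nu}[\|x-\mu(x)\|_1]}.$$ *)

theory Defs
  imports "HOL-Probability.Probability"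
begin

text \<open>Points of R^d are vectors of type real^'d (coordinates x $ j, j :: 'd, d = CARD('d)).\<close>

definition l1dist :: "real ^ 'd \<Rightarrow> real ^ 'd \<Rightarrow> real" where
  "l1dist x c = (\<Sum>j\<in>UNIV. \<bar>x $ j - c $ j\<bar>)"

text \<open>Binary decision trees with axis-aligned threshold cuts:
  Node i \<theta> l r sends x to l if x $ i \<le> \<theta> and to r if x $ i > \<theta>.\<close>
datatype 'd dtree = Leaf | Node 'd real "'d dtree" "'d dtree"

fun leaf_regions :: "'d dtree \<Rightarrow> (real ^ 'd) set list" where
  "leaf_regions Leaf = [UNIV]"
| "leaf_regions (Node i \<theta> l r) =
     map (\<lambda>A. A \<inter> {x. x $ i \<le> \<theta>}) (leaf_regions l) @
     map (\<lambda>A. A \<inter> {x. x $ i > \<theta>}) (leaf_regions r)"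

definition is_decision_tree :: "nat \<Rightarrow> (nat \<Rightarrow> real ^ 'd) \<Rightarrow> 'd dtree \<Rightarrow> bool" where
  "is_decision_tree K mu T \<longleftrightarrow>
     length (leaf_regions T) = K \<and>
     (\<forall>A \<in> set (leaf_regions T). card {k. k < K \<and> mu k \<in> A} = 1)"

text \<open>Expectation over the mixture nu = sum_k p k * nu k, with mu(x) = mu k for the
  component k from which x was drawn.\<close>
definition mix_exp :: "nat \<Rightarrow> (nat \<Rightarrow> real) \<Rightarrow> (nat \<Rightarrow> (real ^ 'd) measure)
     \<Rightarrow> (nat \<Rightarrow> real ^ 'd) \<Rightarrow> (real ^ 'd \<Rightarrow> real ^ 'd \<Rightarrow> real) \<Rightarrow> real" where
  "mix_exp K p nu mu f = (\<Sum>k<K. p k * (\<integral>x. f x (mu k) \<partial>nu k))"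

text \<open>c is a median of region A w.r.t. the mixture: it minimises
  E[ l1dist x' c | x' in A ]; equivalently (multiplying by the constant nu(A))
  it minimises E[ 1_A(x') * l1dist x' c ].\<close>
definition is_leaf_median :: "nat \<Rightarrow> (nat \<Rightarrow> real) \<Rightarrow> (nat \<Rightarrow> (real ^ 'd) measure)
     \<Rightarrow> (real ^ 'd) set \<Rightarrow> real ^ 'd \<Rightarrow> bool" where
  "is_leaf_median K p nu A c \<longleftrightarrow>
     (\<forall>c'. (\<Sum>k<K. p k * (\<integral>x. indicator A x * l1dist x c \<partial>nu k))
           \<le> (\<Sum>k<K. p k * (\<integral>x. indicator A x * l1dist x c' \<partial>nu k)))"

definition price :: "nat \<Rightarrow> (nat \<Rightarrow> real) \<Rightarrow> (nat \<Rightarrow> (real ^ 'd) measure)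
     \<Rightarrow> (nat \<Rightarrow> real ^ 'd) \<Rightarrow> 'd dtree \<Rightarrow> (nat \<Rightarrow> real ^ 'd) \<Rightarrow> real" where
  "price K p nu mu T med =
     (\<Sum>k<K. p k * (\<integral>x. (\<Sum>t<length (leaf_regions T).
          indicator (leaf_regions T ! t) x * l1dist x (med t)) \<partial>nu k))
     / mix_exp K p nu mu l1dist"

definition ENR :: "nat \<Rightarrow> (nat \<Rightarrow> real ^ 'd) \<Rightarrow> ('d \<Rightarrow> real) \<Rightarrow> real" where
  "ENR K mu \<sigma> = Min ((\<lambda>(k, l). Max ((\<lambda>j. (mu k $ j - mu l $ j)^2 / (\<sigma> j)^2) ` UNIV))
                      ` {(k, l). k < K \<and> l < K \<and> k \<noteq> l})"

end

theory Submission
  imports Defs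
begin

lemma ser: "N \<ge> 1 \<Longrightarrow> (\<Sum>k=1..N. 1/(real k - 1/2)^2) \<le> 5 - 1/real N"
proof (induction N rule: dec_induct)
  case base then show ?case by (simp add: power2_eq_square)
next
  case (step n)
  have n0: "real n > 0" using step by simp
  have a: "(real n + 1/2)^2 \<ge> real n * (real n + 1)" by (simp add: power2_eq_square algebra_simps)
  have "1/(real n + 1/2)^2 \<le> 1/(real n * (real n + 1))"
    by (rule divide_left_mono[OF a]) (use n0 in auto)
  also have "\<dots> = 1/real n - 1/(real n + 1)" using n0 by (simp add: field_simps)
  finally have "1/(real (Suc n) - 1/2)^2 \<le> 1/real n - 1/(real n + 1)" by (simp add: add.commute)
  moreover have "(\<Sum>k=1..Suc n. 1/(real k - 1/2)^2) = (\<Sum>k=1..n. 1/(real k - 1/2)^2) + 1/(real (Suc n) - 1/2)^2"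
    by simp
  moreover have "1/real (Suc n) = 1/(real n + 1)" by simp
  ultimately show ?case using step.IH by linarith
qed

lemma gap_exists:
  fixes Y :: "real set"
  shows "finite Y \<Longrightarrow> card Y \<ge> 2 \<Longrightarrow> \<exists>u v. u \<in> Y \<and> v \<in> Y \<and> u < v \<and> (\<forall>y\<in>Y. y \<le> u \<or> v \<le> y)
      \<and> Max Y - Min Y \<le> (real (card Y) - 1) * (v - u)"
proof (induction "card Y" arbitrary: Y rule: less_induct)
  case less
  define b where "b = Max Y"
  define Y' where "Y' = Y - {b}"
  have neY: "Y \<noteq> {}" using less by auto
  have bY: "b \<in> Y" using less b_def neY by simp
  have fY': "finite Y'" using less Y'_def by auto
  have cY': "card Y' = card Y - 1" using bY less Y'_def by simp
  have "card Y' \<ge> 1" using cY' less by linarith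
  then have neY': "Y' \<noteq> {}" by auto
  define b' where "b' = Max Y'"
  have b'Y': "b' \<in> Y'" using fY' neY' b'_def by simp
  have b'Y: "b' \<in> Y" using b'Y' Y'_def by simp
  have b'b: "b' < b" using b'Y' Y'_def b_def less by (metis DiffD1 DiffD2 Max_ge insertI1 order_le_less)
  have maxY': "\<forall>y\<in>Y'. y \<le> b'" using b'_def fY' by simp
  have minY: "Min Y = Min Y'"
  proof -
    have "Min Y \<le> Min Y'" using fY' neY' less Y'_def by (simp add: Min_antimono)
    moreover have mY: "Min Y \<in> Y" using less neY by simp
    moreover have "Min Y \<le> b'" using b'Y less by simp
    ultimately show ?thesis using fY' Y'_def b'b by (metis Diff_iff Min_le antisym empty_iff insert_iff not_le)
  qed
  show ?case
  proof (cases "(real (card Y) - 1) * (b - b') \<ge> b - Min Y")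
    case True
    show ?thesis
      apply (rule exI[of _ b'], rule exI[of _ b])
      using True b'Y bY b'b maxY' Y'_def b_def by auto
  next
    case False
    have c2: "card Y' \<ge> 2"
    proof (rule ccontr)
      assume "\<not> card Y' \<ge> 2"
      then have "card Y' = 1" using fY' neY' by (metis One_nat_def card_0_eq less_2_cases not_le)
      then have "Y' = {b'}" using b'Y' by (metis card_1_singletonE singletonD)
      then have "Min Y = b'" using minY by simp
      moreover have "card Y = 2" using cY' \<open>card Y' = 1\<close> by linarith
      ultimately show False using False by simp
    qed
    obtain u v where uv: "u \<in> Y'" "v \<in> Y'" "u < v" "\<forall>y\<in>Y'. y \<le> u \<or> v \<le> y"
      "Max Y' - Min Y' \<le> (real (card Y') - 1) * (v - u)"
      using less(1)[of Y'] fY' c2 cY' less by auto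
    have N: "real (card Y') = real (card Y) - 1" using cY' less by auto
    have "b - Min Y < (real (card Y) - 1) * (v - u)"
    proof -
      define N where "N = real (card Y)"
      define a where "a = Min Y"
      have N3: "N \<ge> 3" using c2 cY' N_def by linarith
      have h1: "(N - 1) * (b - b') < b - a" using False N_def a_def by simp
      have h2: "b' - a \<le> (N - 2) * (v - u)" using uv(5) minY b'_def N N_def a_def by simp
      have "(N - 1) * (b - a) = (N - 1) * (b - b') + (N - 1) * (b' - a)" by (simp add: algebra_simps)
      also have "\<dots> < (b - a) + (N - 1) * (b' - a)" using h1 by simp
      finally have "(N - 2) * (b - a) < (N - 1) * (b' - a)" by (simp add: algebra_simps)
      also have "\<dots> \<le> (N - 1) * ((N - 2) * (v - u))" using h2 N3 by (intro mult_left_mono) auto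
      finally have "(N - 2) * (b - a) < (N - 2) * ((N - 1) * (v - u))" by (simp add: algebra_simps)
      then have "b - a < (N - 1) * (v - u)" using N3 by (simp add: mult_less_cancel_left)
      then show ?thesis using N_def a_def by simp
    qed
    moreover have "v \<le> b'" using maxY' uv(2) by simp
    moreover have "\<forall>y\<in>Y. y \<le> u \<or> v \<le> y"
    proof
      fix y assume "y \<in> Y"
      show "y \<le> u \<or> v \<le> y"
      proof (cases "y = b")
        case True then show ?thesis using \<open>v \<le> b'\<close> b'b by simp
      next
        case False then show ?thesis using uv(4) \<open>y \<in> Y\<close> Y'_def by simp
      qed
    qed
    ultimately have "Max Y - Min Y \<le> (real (card Y) - 1) * (v - u)" "\<forall>y\<in>Y. y \<le> u \<or> v \<le> y"
      using b_def by auto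
    moreover have "u \<in> Y" "v \<in> Y" using uv Y'_def by auto
    ultimately show ?thesis using uv(3) by blast
  qed
qed

lemma ser_inj:
  fixes g :: "nat \<Rightarrow> nat" and A :: "nat set"
  assumes "finite A" "inj_on g A" "\<forall>e\<in>A. 1 \<le> g e \<and> g e \<le> N"
  shows "(\<Sum>e\<in>A. 1/(real (g e) - 1/2)^2) \<le> 5"
proof -
  have "(\<Sum>e\<in>A. 1/(real (g e) - 1/2)^2) = (\<Sum>k\<in>g`A. 1/(real k - 1/2)^2)"
    using assms(2) by (simp add: sum.reindex)
  also have "\<dots> \<le> (\<Sum>k=1..N. 1/(real k - 1/2)^2)"
    using assms(3) by (intro sum_mono2) auto
  also have "\<dots> \<le> 5"
  proof (cases "N \<ge> 1")
    case True
    have "1/real N \<ge> 0" by simp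
    then show ?thesis using ser[of N] True by linarith
  next
    case False then show ?thesis by simp
  qed
  finally show ?thesis .
qed

lemma cell_dist:
  fixes a h z :: real and M :: nat
  assumes h: "h > 0" and M: "M \<ge> 1" and z: "0 \<le> z" "z \<le> real M * h"
  defines "c \<equiv> min (M - 1) (nat \<lfloor>z / h\<rfloor>)"
  shows "real c * h \<le> z" "z \<le> (real c + 1) * h" "c < M"
proof -
  have f1: "real_of_int \<lfloor>z/h\<rfloor> \<le> z/h" by simp
  have f2: "z/h < real_of_int \<lfloor>z/h\<rfloor> + 1" by simp
  have fl0: "\<lfloor>z/h\<rfloor> \<ge> 0" using z h by simp
  have zh: "z/h \<le> real M" using z h by (simp add: field_simps)
  show "c < M" unfolding c_def using M by simp
  show "real c * h \<le> z"
  proof (cases "M - 1 \<le> nat \<lfloor>z / h\<rfloor>")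
    case True
    then have "c = M - 1" unfolding c_def by simp
    moreover have "real (M - 1) \<le> z/h" using True f1 fl0 M
      by (metis of_nat_le_iff of_nat_nat order_trans le_of_int_ceiling floor_le_ceiling of_int_of_nat_eq)
    ultimately show ?thesis using h by (simp add: field_simps)
  next
    case False
    then have "c = nat \<lfloor>z / h\<rfloor>" unfolding c_def by simp
    then have "real c \<le> z/h" using f1 fl0 by simp
    then show ?thesis using h by (simp add: field_simps)
  qed
  show "z \<le> (real c + 1) * h"
  proof (cases "M - 1 \<le> nat \<lfloor>z / h\<rfloor>")
    case True
    then have "c = M - 1" unfolding c_def by simp
    then have "real c + 1 = real M" using M by simp
    then show ?thesis using z by simp
  next
    case False
    then have "c = nat \<lfloor>z / h\<rfloor>" unfolding c_def by simp
    then have "z/h \<le> real c + 1" using f2 fl0 by simp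
    then show ?thesis using h by (simp add: field_simps)
  qed
qed

lemma one_point_sum:
  fixes z h :: real and M c :: nat
  assumes h: "h > 0" and cz: "real c * h \<le> z" "z \<le> (real c + 1) * h" and cM: "c < M"
  shows "(\<Sum>e\<in>{..<M} - {c}. 1/(z - (real e + 1/2) * h)^2) \<le> 10 / h^2"
proof -
  define g where "g = (\<lambda>k::nat. 1/(real k - 1/2)^2)"
  have pt: "1/(z - (real e + 1/2) * h)^2 \<le> g (if c < e then e - c else c - e) / h^2"
    if "e \<in> {..<M} - {c}" for e
  proof -
    define k where "k = (if c < e then e - c else c - e)"
    have k1: "k \<ge> 1" using that k_def by auto
    have dist: "(real k - 1/2) * h \<le> \<bar>z - (real e + 1/2) * h\<bar>"
    proof (cases "c < e")
      case True
      then have "real k = real e - real c" using k_def by simp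
      then have "(real k - 1/2) * h = (real e - real c - 1/2) * h" by simp
      also have "\<dots> = (real e + 1/2) * h - (real c + 1) * h" by (simp add: algebra_simps)
      finally have "(real k - 1/2) * h = (real e + 1/2) * h - (real c + 1) * h" .
      moreover have "(real e + 1/2) * h - z \<le> \<bar>z - (real e + 1/2) * h\<bar>" by linarith
      ultimately show ?thesis using cz by linarith
    next
      case False
      then have "e < c" using that by auto
      then have "real k = real c - real e" using k_def by simp
      then have "(real k - 1/2) * h = (real c - real e - 1/2) * h" by simp
      also have "\<dots> = real c * h - (real e + 1/2) * h" by (simp add: algebra_simps)
      finally have "(real k - 1/2) * h = real c * h - (real e + 1/2) * h" .
      moreover have "z - (real e + 1/2) * h \<le> \<bar>z - (real e + 1/2) * h\<bar>" by linarith
      ultimately show ?thesis using cz by linarith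
    qed
    have pos: "0 < (real k - 1/2) * h" using k1 h by simp
    have "((real k - 1/2) * h)^2 \<le> (z - (real e + 1/2) * h)^2"
      using dist pos by (metis abs_le_square_iff abs_of_pos)
    moreover have p2: "0 < ((real k - 1/2) * h)^2" by (rule zero_less_power[OF pos])
    ultimately have p3: "0 < (z - (real e + 1/2) * h)^2" by linarith
    have "1/(z - (real e + 1/2) * h)^2 \<le> 1/((real k - 1/2) * h)^2"
      using p2 p3 \<open>((real k - 1/2) * h)^2 \<le> _\<close> by (intro divide_left_mono mult_pos_pos) auto
    also have "\<dots> = g k / h^2" unfolding g_def by (simp add: power_mult_distrib)
    finally show ?thesis unfolding k_def .
  qed
  have split: "{..<M} - {c} = {c<..<M} \<union> {..<c}" using cM by auto
  have "(\<Sum>e\<in>{..<M} - {c}. 1/(z - (real e + 1/2) * h)^2)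
      \<le> (\<Sum>e\<in>{..<M} - {c}. g (if c < e then e - c else c - e) / h^2)"
    using pt by (intro sum_mono) auto
  also have "\<dots> = (\<Sum>e\<in>{c<..<M}. g (e - c)) / h^2 + (\<Sum>e\<in>{..<c}. g (c - e)) / h^2"
    unfolding split by (subst sum.union_disjoint) (auto simp: sum_divide_distrib intro!: sum.cong)
  also have "\<dots> \<le> 5 / h^2 + 5 / h^2"
  proof (intro add_mono divide_right_mono)
    show "(\<Sum>e\<in>{c<..<M}. g (e - c)) \<le> 5" unfolding g_def
      by (rule ser_inj[where N=M]) (auto simp: inj_on_def)
    show "(\<Sum>e\<in>{..<c}. g (c - e)) \<le> 5" unfolding g_def
      by (rule ser_inj[where N=M]) (use cM in \<open>auto simp: inj_on_def\<close>)
  qed auto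
  finally show ?thesis by simp
qed

lemma cell_theta:
  fixes S :: "nat set" and y :: "nat \<Rightarrow> real" and a b :: real
  assumes fin: "finite S" and n1: "card S \<ge> 1" and rng: "\<And>m. m \<in> S \<Longrightarrow> a \<le> y m \<and> y m \<le> b"
    and ab: "a < b"
  shows "\<exists>\<theta>. a < \<theta> \<and> \<theta> < b \<and> (\<forall>m\<in>S. y m \<noteq> \<theta>) \<and>
           (\<Sum>m\<in>S. 1/(y m - \<theta>)^2) \<le> 40 * real (card S)^2 / (b - a)^2"
proof -
  define n where "n = card S"
  define M where "M = 2 * n"
  define h where "h = (b - a) / real M"
  have M1: "M \<ge> 1" using n1 n_def M_def by simp
  have h0: "h > 0" using ab M1 h_def by simp
  have Mh: "real M * h = b - a" using M1 h_def by simp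
  define cell where "cell = (\<lambda>m. min (M - 1) (nat \<lfloor>(y m - a) / h\<rfloor>))"
  define th where "th = (\<lambda>e::nat. a + (real e + 1/2) * h)"
  have cellp: "real (cell m) * h \<le> y m - a" "y m - a \<le> (real (cell m) + 1) * h" "cell m < M"
    if "m \<in> S" for m
    using cell_dist[OF h0 M1, of "y m - a"] rng[OF that] Mh unfolding cell_def by auto
  define E where "E = {..<M} - cell ` S"
  have cardE: "card E \<ge> n"
  proof -
    have "card (cell ` S) \<le> n" using fin n_def card_image_le by blast
    moreover have "card E \<ge> card {..<M} - card (cell ` S)" unfolding E_def
      by (rule diff_card_le_card_Diff) (use fin in auto)
    ultimately show ?thesis using M_def by simp
  qed
  have finE: "finite E" using E_def by simp
  have neE: "E \<noteq> {}" using cardE n1 n_def by auto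
  define F where "F = (\<lambda>e. \<Sum>m\<in>S. 1/(y m - th e)^2)"
  have "(\<Sum>e\<in>E. F e) = (\<Sum>m\<in>S. \<Sum>e\<in>E. 1/(y m - th e)^2)" unfolding F_def by (rule sum.swap)
  also have "\<dots> \<le> (\<Sum>m\<in>S. \<Sum>e\<in>{..<M} - {cell m}. 1/(y m - th e)^2)"
    by (intro sum_mono sum_mono2) (auto simp: E_def)
  also have "\<dots> \<le> (\<Sum>m\<in>S. 10 / h^2)"
  proof (intro sum_mono)
    fix m assume m: "m \<in> S"
    have "(\<Sum>e\<in>{..<M} - {cell m}. 1/((y m - a) - (real e + 1/2) * h)^2) \<le> 10 / h^2"
      by (rule one_point_sum[OF h0 cellp[OF m]])
    then show "(\<Sum>e\<in>{..<M} - {cell m}. 1/(y m - th e)^2) \<le> 10 / h^2"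
      unfolding th_def by (simp add: algebra_simps)
  qed
  also have "\<dots> = real n * (10 / h^2)" using n_def by simp
  finally have sumF: "(\<Sum>e\<in>E. F e) \<le> real n * (10 / h^2)" .
  have "\<exists>e\<in>E. F e \<le> 10 / h^2"
  proof (rule ccontr)
    assume "\<not> ?thesis"
    then have "\<forall>e\<in>E. 10 / h^2 < F e" by auto
    then have "(\<Sum>e\<in>E. 10 / h^2) < (\<Sum>e\<in>E. F e)" using finE neE by (intro sum_strict_mono) auto
    moreover have "(\<Sum>e\<in>E. 10 / h^2) \<ge> real n * (10 / h^2)"
    proof -
      have "real n \<le> real (card E)" using cardE by simp
      then have "real n * (10 / h^2) \<le> real (card E) * (10 / h^2)" using h0 by (intro mult_right_mono) auto
      then show ?thesis by simp
    qed
    ultimately show False using sumF by linarith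
  qed
  then obtain e where eE: "e \<in> E" and Fe: "F e \<le> 10 / h^2" by blast
  have eM: "e < M" using eE E_def by simp
  have ne: "y m \<noteq> th e" if "m \<in> S" for m
  proof
    assume eq: "y m = th e"
    have "cell m \<noteq> e" using eE that E_def by auto
    then have "cell m < e \<or> e < cell m" by auto
    then show False
    proof
      assume "cell m < e"
      then have "real (cell m) + 1 \<le> real e" by simp
      then have "(real (cell m) + 1) * h \<le> real e * h" using h0 by (intro mult_right_mono) auto
      also have "\<dots> < (real e + 1/2) * h" using h0 by (simp add: distrib_right)
      finally have "(real (cell m) + 1) * h < (real e + 1/2) * h" .
      then show False using cellp(2)[OF that] eq th_def by simp
    next
      assume "e < cell m"
      then have "real e + 1 \<le> real (cell m)" by simp
      then have "(real e + 1) * h \<le> real (cell m) * h" using h0 by (intro mult_right_mono) auto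
      moreover have "(real e + 1/2) * h < (real e + 1) * h" using h0 by (simp add: distrib_right)
      ultimately have "(real e + 1/2) * h < real (cell m) * h" by linarith
      then show False using cellp(1)[OF that] eq th_def by simp
    qed
  qed
  have "10 / h^2 = 40 * real n^2 / (b - a)^2"
  proof -
    have ba: "b - a = 2 * real n * h" using Mh M_def by simp
    have n0: "real n > 0" using n1 n_def by simp
    show ?thesis unfolding ba using n0 h0 by (simp add: power_mult_distrib field_simps power2_eq_square)
  qed
  moreover have "a < th e" using h0 th_def by simp
  moreover have "th e < b"
  proof -
    have "real e + 1/2 < real M" using eM by linarith
    then have "(real e + 1/2) * h < real M * h" using h0 by simp
    then show ?thesis using Mh th_def by simp
  qed
  ultimately show ?thesis using ne Fe F_def n_def by (intro exI[of _ "th e"]) auto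
qed

lemma gap_theta:
  fixes S :: "nat set" and y :: "nat \<Rightarrow> real" and a b :: real
  assumes fin: "finite S" and rng: "\<And>m. m \<in> S \<Longrightarrow> a \<le> y m \<and> y m \<le> b"
    and aS: "a \<in> y ` S" and bS: "b \<in> y ` S" and ab: "a < b"
  shows "\<exists>\<theta>. a < \<theta> \<and> \<theta> < b \<and> (\<forall>m\<in>S. y m \<noteq> \<theta>) \<and>
           (\<Sum>m\<in>S. 1/(y m - \<theta>)^2) \<le> 4 * real (card S) * (real (card S) - 1)^2 / (b - a)^2"
proof -
  define Y where "Y = y ` S"
  have fY: "finite Y" using fin Y_def by simp
  have cY: "card Y \<ge> 2"
  proof -
    have "{a, b} \<subseteq> Y" using aS bS Y_def by auto
    then have "card {a, b} \<le> card Y" using fY by (intro card_mono) auto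
    then show ?thesis using ab by simp
  qed
  have cYS: "card Y \<le> card S" using Y_def fin card_image_le by blast
  have maxY: "Max Y = b" using fY bS rng Y_def by (intro Max_eqI) auto
  have minY: "Min Y = a" using fY aS rng Y_def by (intro Min_eqI) auto
  obtain u v where uv: "u \<in> Y" "v \<in> Y" "u < v" "\<forall>z\<in>Y. z \<le> u \<or> v \<le> z"
    "Max Y - Min Y \<le> (real (card Y) - 1) * (v - u)"
    using gap_exists[OF fY cY] by blast
  define n where "n = card S"
  have n2: "real n \<ge> 2" using cY cYS n_def by simp
  have gap: "b - a \<le> (real n - 1) * (v - u)"
  proof -
    have "(real (card Y) - 1) * (v - u) \<le> (real n - 1) * (v - u)"
      using cYS n_def uv(3) by (intro mult_right_mono) auto
    then show ?thesis using uv(5) maxY minY by simp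
  qed
  define \<theta> where "\<theta> = (u + v) / 2"
  have ua: "a \<le> u" using uv(1) rng Y_def by auto
  have vb: "v \<le> b" using uv(2) rng Y_def by auto
  have d: "(b - a) / (2 * (real n - 1)) \<le> \<bar>y m - \<theta>\<bar>" if m: "m \<in> S" for m
  proof -
    have g: "(b - a) / (2 * (real n - 1)) \<le> (v - u) / 2" using gap n2 by (simp add: field_simps)
    have "y m \<le> u \<or> v \<le> y m" using uv(4) m Y_def by auto
    then show ?thesis
    proof
      assume "y m \<le> u"
      then have "(v - u) / 2 \<le> \<theta> - y m" unfolding \<theta>_def by (simp add: field_simps)
      moreover have "\<theta> - y m \<le> \<bar>y m - \<theta>\<bar>" by linarith
      ultimately show ?thesis using g by linarith
    next
      assume "v \<le> y m"
      then have "(v - u) / 2 \<le> y m - \<theta>" unfolding \<theta>_def by (simp add: field_simps)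
      moreover have "y m - \<theta> \<le> \<bar>y m - \<theta>\<bar>" by linarith
      ultimately show ?thesis using g by linarith
    qed
  qed
  have dpos: "(b - a) / (2 * (real n - 1)) > 0" using ab n2 by simp
  have trm: "1/(y m - \<theta>)^2 \<le> 4 * (real n - 1)^2 / (b - a)^2" if m: "m \<in> S" for m
  proof -
    have "((b - a) / (2 * (real n - 1)))^2 \<le> (y m - \<theta>)^2"
      using d[OF m] dpos by (metis abs_le_square_iff abs_of_pos)
    moreover have p2: "0 < ((b - a) / (2 * (real n - 1)))^2" by (rule zero_less_power[OF dpos])
    ultimately have p3: "0 < (y m - \<theta>)^2" by linarith
    have "1/(y m - \<theta>)^2 \<le> 1/((b - a) / (2 * (real n - 1)))^2"
      using p2 p3 \<open>((b - a) / (2 * (real n - 1)))^2 \<le> _\<close> by (intro divide_left_mono mult_pos_pos) auto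
    also have "\<dots> = 4 * (real n - 1)^2 / (b - a)^2"
    proof -
      have "(2 * (real n - 1))^2 = 4 * (real n - 1)^2" by (simp add: power2_eq_square algebra_simps)
      then show ?thesis by (simp add: power_divide)
    qed
    finally show ?thesis .
  qed
  have "(\<Sum>m\<in>S. 1/(y m - \<theta>)^2) \<le> (\<Sum>m\<in>S. 4 * (real n - 1)^2 / (b - a)^2)"
    using trm by (intro sum_mono) auto
  also have "\<dots> = 4 * real n * (real n - 1)^2 / (b - a)^2" using n_def by simp
  finally have sum: "(\<Sum>m\<in>S. 1/(y m - \<theta>)^2) \<le> 4 * real n * (real n - 1)^2 / (b - a)^2" .
  have ne: "\<forall>m\<in>S. y m \<noteq> \<theta>" using d dpos by fastforce
  have "a < \<theta>" "\<theta> < b" using ua vb uv(3) \<theta>_def by auto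
  then show ?thesis using sum ne n_def by blast
qed

lemma theta_exists:
  fixes S :: "nat set" and y :: "nat \<Rightarrow> real" and a b :: real
  assumes fin: "finite S" and rng: "\<And>m. m \<in> S \<Longrightarrow> a \<le> y m \<and> y m \<le> b"
    and aS: "a \<in> y ` S" and bS: "b \<in> y ` S" and ab: "a < b"
  shows "\<exists>\<theta>. a < \<theta> \<and> \<theta> < b \<and> (\<forall>m\<in>S. y m \<noteq> \<theta>) \<and>
           (\<Sum>m\<in>S. 1/(y m - \<theta>)^2) \<le> 20 * (real (card S) - 1) * (3 * real (card S) - 2) / (b - a)^2"
proof -
  define n where "n = real (card S)"
  have n1: "card S \<ge> 1" using aS fin by (metis card_0_eq empty_iff image_empty less_one not_le)
  have ba: "(b - a)^2 > 0" using ab by simp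
  show ?thesis
  proof (cases "card S \<ge> 5")
    case True
    have "\<exists>\<theta>. a < \<theta> \<and> \<theta> < b \<and> (\<forall>m\<in>S. y m \<noteq> \<theta>) \<and>
           (\<Sum>m\<in>S. 1/(y m - \<theta>)^2) \<le> 40 * real (card S)^2 / (b - a)^2"
      by (rule cell_theta[OF fin n1 _ ab]) (simp add: rng)
    then obtain \<theta> where th: "a < \<theta>" "\<theta> < b" "\<forall>m\<in>S. y m \<noteq> \<theta>"
      "(\<Sum>m\<in>S. 1/(y m - \<theta>)^2) \<le> 40 * real (card S)^2 / (b - a)^2" by blast
    have n5: "n \<ge> 5" using True n_def by simp
    have "40 * n^2 \<le> 20 * (n - 1) * (3 * n - 2)"
    proof -
      have "5 * n \<le> n * n" using n5 by (intro mult_right_mono) auto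
      then have "n * n - 5 * n + 2 \<ge> 0" by linarith
      then show ?thesis by (simp add: power2_eq_square algebra_simps)
    qed
    then have "40 * n^2 / (b - a)^2 \<le> 20 * (n - 1) * (3 * n - 2) / (b - a)^2"
      using ba by (simp add: divide_right_mono)
    then show ?thesis using th n_def by (intro exI[of _ \<theta>]) auto
  next
    case False
    obtain \<theta> where th: "a < \<theta>" "\<theta> < b" "\<forall>m\<in>S. y m \<noteq> \<theta>"
      "(\<Sum>m\<in>S. 1/(y m - \<theta>)^2) \<le> 4 * real (card S) * (real (card S) - 1)^2 / (b - a)^2"
      using gap_theta[OF fin rng aS bS ab] by blast
    have n4: "n \<le> 4" "n \<ge> 1" using False n1 n_def by auto
    have "4 * n * (n - 1)^2 \<le> 20 * (n - 1) * (3 * n - 2)"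
    proof -
      have "n * (n - 1) \<le> 4 * (n - 1)" using n4 by (intro mult_right_mono) auto
      moreover have "4 * (n - 1) \<le> 5 * (3 * n - 2)" using n4(2) by (simp add: algebra_simps)
      ultimately have "n * (n - 1) \<le> 5 * (3 * n - 2)" by (rule order_trans)
      then have "(n - 1) * (n * (n - 1)) \<le> (n - 1) * (5 * (3 * n - 2))" using n4 by (intro mult_left_mono) auto
      then show ?thesis by (simp add: power2_eq_square algebra_simps)
    qed
    then have "4 * n * (n - 1)^2 / (b - a)^2 \<le> 20 * (n - 1) * (3 * n - 2) / (b - a)^2"
      using ba by (simp add: divide_right_mono)
    then show ?thesis using th n_def by (intro exI[of _ \<theta>]) auto
  qed
qed

definition Ccost :: "'d dtree \<Rightarrow> (real ^ 'd) list \<Rightarrow> real ^ 'd \<Rightarrow> real" where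
  "Ccost T cs x = (\<Sum>t<length (leaf_regions T). indicator (leaf_regions T ! t) x * l1dist x (cs ! t))"

lemma sum_lessThan_add_split:
  "(\<Sum>t<a + b. f t) = (\<Sum>t<a. f t) + (\<Sum>t<b. f (a + t :: nat)) " for f :: "nat \<Rightarrow> real"
  by (induction b) (simp_all add: add.commute add.left_commute)

lemma Ccost_Leaf: "Ccost Leaf [c] x = l1dist x c"
  unfolding Ccost_def by simp

lemma Ccost_Node:
  assumes "length csL = length (leaf_regions L)"
  shows "Ccost (Node i \<theta> L R) (csL @ csR) x = (if x $ i \<le> \<theta> then Ccost L csL x else Ccost R csR x)"
proof -
  define nL where "nL = length (leaf_regions L)"
  define nR where "nR = length (leaf_regions R)"
  have "Ccost (Node i \<theta> L R) (csL @ csR) x =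
    (\<Sum>t<nL. indicator (leaf_regions L ! t \<inter> {x. x $ i \<le> \<theta>}) x * l1dist x (csL ! t)) +
    (\<Sum>t<nR. indicator (leaf_regions R ! t \<inter> {x. \<theta> < x $ i}) x * l1dist x (csR ! t))"
    unfolding Ccost_def using assms
    by (simp add: sum_lessThan_add_split nL_def nR_def nth_append)
  also have "\<dots> = (if x $ i \<le> \<theta> then Ccost L csL x else Ccost R csR x)"
    unfolding Ccost_def nL_def nR_def by (cases "x $ i \<le> \<theta>") (simp_all add: indicator_inter_arith)
  finally show ?thesis .
qed

lemma leaf_regions_borel: "A \<in> set (leaf_regions T) \<Longrightarrow> A \<in> sets (borel :: (real ^ 'd) measure)"
proof (induction T arbitrary: A)
  case Leaf then show ?case by simp
next
  case (Node i \<theta> L R)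
  have h1: "{x::real^'d. x $ i \<le> \<theta>} \<in> sets borel"
  proof -
    have "{x::real^'d. x $ i \<le> \<theta>} = (\<lambda>x. x $ i) -` {..\<theta>} \<inter> space borel" by auto
    then show ?thesis using measurable_sets[OF borel_measurable_nth[of i], of "{..\<theta>}"] by simp
  qed
  have h2: "{x::real^'d. \<theta> < x $ i} \<in> sets borel"
  proof -
    have "{x::real^'d. \<theta> < x $ i} = (\<lambda>x. x $ i) -` {\<theta><..} \<inter> space borel" by auto
    then show ?thesis using measurable_sets[OF borel_measurable_nth[of i], of "{\<theta><..}"] by simp
  qed
  from Node.prems show ?case using Node.IH h1 h2 by auto
qed

lemma leaf_regions_cover: "\<exists>A\<in>set (leaf_regions T). x \<in> A"
proof (induction T)
  case Leaf then show ?case by simp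
next
  case (Node i \<theta> L R)
  show ?case
  proof (cases "x $ i \<le> \<theta>")
    case True
    then obtain A where A: "A \<in> set (leaf_regions L)" "x \<in> A" using Node.IH by blast
    have "A \<inter> {x. x $ i \<le> \<theta>} \<in> set (leaf_regions (Node i \<theta> L R))" using A(1) by simp
    moreover have "x \<in> A \<inter> {x. x $ i \<le> \<theta>}" using A(2) True by simp
    ultimately show ?thesis by (rule rev_bexI)
  next
    case False
    then obtain A where A: "A \<in> set (leaf_regions R)" "x \<in> A" using Node.IH by blast
    have "A \<inter> {x. \<theta> < x $ i} \<in> set (leaf_regions (Node i \<theta> L R))" using A(1) by simp
    moreover have "x \<in> A \<inter> {x. \<theta> < x $ i}" using A(2) False by simp
    ultimately show ?thesis by (rule rev_bexI)
  qed
qed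

lemma meas_nth: "sets N = sets borel \<Longrightarrow> (\<lambda>x::real^'d. x $ j) \<in> borel_measurable N"
  by (subst measurable_cong_sets[of N borel, OF _ refl]) (simp_all add: borel_measurable_nth)

lemma l1dist_meas_borel: "(\<lambda>x::real^'d. l1dist x c) \<in> borel_measurable borel"
  unfolding l1dist_def
  by (intro borel_measurable_sum borel_measurable_abs borel_measurable_diff borel_measurable_nth borel_measurable_const)

lemma l1dist_meas: "sets N = sets borel \<Longrightarrow> (\<lambda>x::real^'d. l1dist x c) \<in> borel_measurable N"
  by (subst measurable_cong_sets[of N borel, OF _ refl]) (simp_all add: l1dist_meas_borel)

lemma l1dist_int:
  assumes "prob_space N" "sets N = sets borel" "\<And>j. integrable N (\<lambda>x::real^'d. x $ j)"
  shows "integrable N (\<lambda>x. l1dist x c)"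
proof -
  interpret prob_space N by fact
  show ?thesis unfolding l1dist_def
  proof (rule Bochner_Integration.integrable_sum)
    fix j
    show "integrable N (\<lambda>x. \<bar>x $ j - c $ j\<bar>)"
      using assms(3)[of j] by (intro integrable_abs Bochner_Integration.integrable_diff integrable_const) auto
  qed
qed

lemma sym_cheb:
  fixes N :: "(real ^ 'd) measure" and m :: "real ^ 'd"
  assumes ps: "prob_space N" and sN: "sets N = sets borel"
    and sym: "distr N borel (\<lambda>x. 2 *\<^sub>R m - x) = N"
    and sq: "integrable N (\<lambda>x. (x $ j)^2)"
    and mean: "(\<integral>x. x $ j \<partial>N) = m $ j"
    and var: "(\<integral>x. (x $ j - m $ j)^2 \<partial>N) = s^2"
    and r: "r > 0"
  shows "measure N {x. r \<le> x $ j - m $ j} \<le> s^2 / (2 * r^2)"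
    "measure N {x. r \<le> m $ j - x $ j} \<le> s^2 / (2 * r^2)"
proof -
  interpret prob_space N by fact
  have sp: "space N = UNIV" using sN by (metis sets_eq_imp_space_eq space_borel)
  define A where "A = {x::real^'d. r \<le> x $ j - m $ j}"
  define B where "B = {x::real^'d. r \<le> m $ j - x $ j}"
  have fm: "(\<lambda>x::real^'d. 2 *\<^sub>R m - x) \<in> borel_measurable N"
  proof -
    have "(\<lambda>x::real^'d. 2 *\<^sub>R m - x) \<in> borel_measurable borel"
      by (rule borel_measurable_continuous_onI) (intro continuous_on_diff continuous_on_const continuous_on_id)
    then show ?thesis by (subst measurable_cong_sets[OF sN refl])
  qed
  have Ab: "A \<in> sets borel"
  proof -
    have "A = (\<lambda>x. x $ j) -` {r + m $ j..} \<inter> space borel" unfolding A_def by auto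
    then show ?thesis using measurable_sets[OF borel_measurable_nth[of j], of "{r + m $ j..}"] by simp
  qed
  have Bb: "B \<in> sets borel"
  proof -
    have "B = (\<lambda>x. x $ j) -` {..m $ j - r} \<inter> space borel" unfolding B_def by auto
    then show ?thesis using measurable_sets[OF borel_measurable_nth[of j], of "{..m $ j - r}"] by simp
  qed
  have "measure N A = measure (distr N borel (\<lambda>x. 2 *\<^sub>R m - x)) A" using sym by simp
  also have "\<dots> = measure N ((\<lambda>x. 2 *\<^sub>R m - x) -` A \<inter> space N)"
    using fm Ab by (simp add: measure_distr)
  also have "(\<lambda>x. 2 *\<^sub>R m - x) -` A \<inter> space N = B" unfolding A_def B_def sp by auto
  finally have AB: "measure N A = measure N B" .
  have rv: "random_variable borel (\<lambda>x::real^'d. x $ j)" using meas_nth[OF sN] by simp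
  have ch: "prob {x\<in>space N. \<bar>x $ j - expectation (\<lambda>x. x $ j)\<bar> \<ge> r} \<le> variance (\<lambda>x. x $ j) / r^2"
    by (rule Chebyshev_inequality[OF rv sq r])
  have "variance (\<lambda>x. x $ j) = s^2" using mean var by simp
  moreover have "{x\<in>space N. \<bar>x $ j - expectation (\<lambda>x. x $ j)\<bar> \<ge> r} = A \<union> B"
    unfolding A_def B_def sp using mean by auto
  ultimately have "measure N (A \<union> B) \<le> s^2 / r^2" using ch by simp
  moreover have "measure N (A \<union> B) = measure N A + measure N B"
    using Ab Bb sN r by (intro finite_measure_Union) (auto simp: A_def B_def)
  ultimately have "2 * measure N A \<le> s^2 / r^2" using AB by simp
  then have r1: "measure N A \<le> s^2 / (2 * r^2)" by (simp add: field_simps)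
  have r2: "measure N B \<le> s^2 / (2 * r^2)" using r1 AB by linarith
  show "measure N {x. r \<le> x $ j - m $ j} \<le> s^2 / (2 * r^2)" using r1 unfolding A_def .
  show "measure N {x. r \<le> m $ j - x $ j} \<le> s^2 / (2 * r^2)" using r2 unfolding B_def .
qed

lemma ind_int:
  assumes "prob_space N" "sets N = sets borel" "H \<in> sets borel"
  shows "integrable N (\<lambda>x. indicator H x * w)" "(\<integral>x. indicator H x * w \<partial>N) = measure N H * w"
proof -
  interpret prob_space N by fact
  have HN: "H \<in> sets N" using assms by simp
  show "integrable N (\<lambda>x. indicator H x * w)"
    using integrable_indicator[OF HN, of w] HN by (simp add: emeasure_eq_measure)
  have sp: "H \<inter> space N = H" using HN sets.sets_into_space by blast
  show "(\<integral>x. indicator H x * w \<partial>N) = measure N H * w" using sp by simp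
qed

lemma halfspace_le_borel: "{x::real^'d. x $ i \<le> \<theta>} \<in> sets borel"
proof -
  have "{x::real^'d. x $ i \<le> \<theta>} = (\<lambda>x. x $ i) -` {..\<theta>} \<inter> space borel" by auto
  then show ?thesis using measurable_sets[OF borel_measurable_nth[of i], of "{..\<theta>}"] by simp
qed

lemma halfspace_gt_borel: "{x::real^'d. \<theta> < x $ i} \<in> sets borel"
proof -
  have "{x::real^'d. \<theta> < x $ i} = (\<lambda>x. x $ i) -` {\<theta><..} \<inter> space borel" by auto
  then show ?thesis using measurable_sets[OF borel_measurable_nth[of i], of "{\<theta><..}"] by simp
qed

lemma l1dist_triangle: "l1dist x c \<le> l1dist x d + l1dist d c"
  unfolding l1dist_def by (simp add: sum.distrib[symmetric] sum_mono abs_triangle_ineq[THEN order_trans] 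
      order_trans[OF _ abs_triangle_ineq])

lemma phi_ineq:
  fixes a b :: nat
  assumes "a \<ge> 1" "b \<ge> 1"
  shows "10 * real a^2 * (real a - 1) + 10 * real b^2 * (real b - 1)
        + 10 * (real (a + b) - 1) * (3 * real (a + b) - 2) \<le> 10 * real (a + b)^2 * (real (a + b) - 1)"
proof -
  define x where "x = real a"
  define y where "y = real b"
  have x1: "x \<ge> 1" and y1: "y \<ge> 1" using assms x_def y_def by auto
  have id: "(x + y)^2 * (x + y - 1) - x^2 * (x - 1) - y^2 * (y - 1) = x * y * (3 * (x + y) - 2)"
    by (simp add: power2_eq_square algebra_simps)
  have "(x - 1) * (y - 1) \<ge> 0" using x1 y1 by simp
  then have xy: "x * y \<ge> x + y - 1" by (simp add: algebra_simps)
  have "(x + y - 1) * (3 * (x + y) - 2) \<le> x * y * (3 * (x + y) - 2)"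
    using xy x1 y1 by (intro mult_right_mono) auto
  then have key: "(x + y - 1) * (3 * (x + y) - 2) \<le> (x + y)^2 * (x + y - 1) - x^2 * (x - 1) - y^2 * (y - 1)"
    using id by simp
  have "10 * (x^2 * (x - 1)) + 10 * (y^2 * (y - 1)) + 10 * ((x + y - 1) * (3 * (x + y) - 2))
      \<le> 10 * ((x + y)^2 * (x + y - 1))" using key by linarith
  moreover have "real (a + b) = x + y" using x_def y_def by simp
  ultimately show ?thesis unfolding x_def[symmetric] y_def[symmetric] by (simp only: mult.assoc)
qed

context
  fixes K :: nat and nu :: "nat \<Rightarrow> (real ^ 'd) measure"
    and mu :: "nat \<Rightarrow> real ^ 'd" and \<sigma> :: "'d \<Rightarrow> real" and s :: real
  assumes prob: "\<And>k. k < K \<Longrightarrow> prob_space (nu k)"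
    and sets_nu: "\<And>k. k < K \<Longrightarrow> sets (nu k) = sets borel"
    and symmetric: "\<And>k. k < K \<Longrightarrow> distr (nu k) borel (\<lambda>x. 2 *\<^sub>R mu k - x) = nu k"
    and mean_int: "\<And>k j. k < K \<Longrightarrow> integrable (nu k) (\<lambda>x. x $ j)"
    and mean: "\<And>k j. k < K \<Longrightarrow> (\<integral>x. x $ j \<partial>nu k) = mu k $ j"
    and sq_int: "\<And>k j. k < K \<Longrightarrow> integrable (nu k) (\<lambda>x. (x $ j)^2)"
    and var: "\<And>k j. k < K \<Longrightarrow> (\<integral>x. (x $ j - mu k $ j)^2 \<partial>nu k) = (\<sigma> j)^2"
    and sigma_pos: "\<And>j. \<sigma> j > 0"
    and s_pos: "s > 0"
    and sep: "\<And>k l. k < K \<Longrightarrow> l < K \<Longrightarrow> k \<noteq> l \<Longrightarrow> \<exists>j. s * \<sigma> j \<le> \<bar>mu k $ j - mu l $ j\<bar>"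
begin

definition good :: "nat set \<Rightarrow> 'd dtree \<Rightarrow> (real ^ 'd) list \<Rightarrow> (nat \<Rightarrow> real ^ 'd \<Rightarrow> real) \<Rightarrow> bool" where
  "good S T cs E \<longleftrightarrow>
     length (leaf_regions T) = card S \<and> length cs = card S \<and>
     (\<forall>A\<in>set (leaf_regions T). card {k\<in>S. mu k \<in> A} = 1) \<and>
     (\<forall>x. \<exists>c\<in>set cs. Ccost T cs x = l1dist x c) \<and> set cs \<subseteq> mu ` S \<and>
     (\<forall>k\<in>S. E k \<in> borel_measurable borel \<and> (\<forall>x. 0 \<le> E k x) \<and> integrable (nu k) (E k) \<and>
        (\<forall>x. Ccost T cs x \<le> l1dist x (mu k) + E k x)) \<and>
     (\<Sum>k\<in>S. \<integral>x. E k x \<partial>nu k) \<le> 10 * real (card S)^2 * (real (card S) - 1) * (\<Sum>j\<in>UNIV. \<sigma> j) / s"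

lemma good_single:
  assumes "k0 < K"
  shows "good {k0} Leaf [mu k0] (\<lambda>k x. 0)"
  unfolding good_def using assms prob
  by (auto simp: Ccost_Leaf)

lemma choose_cut:
  assumes fin: "finite S" and sub: "S \<subseteq> {..<K}" and c2: "card S \<ge> 2"
  shows "\<exists>i \<theta> W. W \<ge> s \<and> (\<forall>j. \<forall>k\<in>S. \<forall>l\<in>S. \<bar>mu k $ j - mu l $ j\<bar> \<le> \<sigma> j * W) \<and>
     (\<exists>k\<in>S. mu k $ i < \<theta>) \<and> (\<exists>k\<in>S. \<theta> < mu k $ i) \<and> (\<forall>k\<in>S. mu k $ i \<noteq> \<theta>) \<and>
     (\<Sum>k\<in>S. (\<sigma> i)^2 / (mu k $ i - \<theta>)^2) \<le> 20 * (real (card S) - 1) * (3 * real (card S) - 2) / W^2"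
proof -
  have neS: "S \<noteq> {}" using c2 by auto
  define c where "c = (\<lambda>j k. mu k $ j)"
  define rng where "rng = (\<lambda>j. (Max (c j ` S) - Min (c j ` S)) / \<sigma> j)"
  obtain i where i: "rng i = Max (range rng)"
    using Max_in[of "range rng"] by (metis finite finite_imageI image_iff UNIV_not_empty image_is_empty)
  define W where "W = rng i"
  have rngW: "rng j \<le> W" for j unfolding W_def i by simp
  have dif: "\<bar>mu k $ j - mu l $ j\<bar> \<le> Max (c j ` S) - Min (c j ` S)" if "k \<in> S" "l \<in> S" for j k l
  proof -
    have "mu k $ j \<le> Max (c j ` S)" "mu l $ j \<le> Max (c j ` S)"
      "Min (c j ` S) \<le> mu k $ j" "Min (c j ` S) \<le> mu l $ j"
      using that fin by (auto simp: c_def)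
    then show ?thesis by linarith
  qed
  have bnd: "\<bar>mu k $ j - mu l $ j\<bar> \<le> \<sigma> j * W" if "k \<in> S" "l \<in> S" for j k l
  proof -
    have "Max (c j ` S) - Min (c j ` S) = \<sigma> j * rng j" using sigma_pos[of j] rng_def by simp
    also have "\<dots> \<le> \<sigma> j * W" using rngW sigma_pos[of j] by (intro mult_left_mono) auto
    finally show ?thesis using dif[OF that, of j] by linarith
  qed
  obtain k l where kl: "k \<in> S" "l \<in> S" "k \<noteq> l"
  proof -
    obtain k where "k \<in> S" using neS by auto
    moreover have "S - {k} \<noteq> {}"
    proof
      assume "S - {k} = {}"
      then have "S \<subseteq> {k}" by auto
      then have "card S \<le> card {k}" by (intro card_mono) auto
      then have "card S \<le> 1" by simp
      then show False using c2 by simp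
    qed
    ultimately show ?thesis using that by blast
  qed
  obtain j0 where j0: "s * \<sigma> j0 \<le> \<bar>mu k $ j0 - mu l $ j0\<bar>" using sep kl sub by blast
  have Ws: "W \<ge> s"
  proof -
    have "s * \<sigma> j0 \<le> \<sigma> j0 * rng j0" using j0 dif[OF kl(1,2), of j0] sigma_pos[of j0] rng_def by simp
    then have "s \<le> rng j0" using sigma_pos[of j0] by (simp add: mult.commute)
    then show ?thesis using rngW[of j0] by linarith
  qed
  define a where "a = Min (c i ` S)"
  define b where "b = Max (c i ` S)"
  have ba: "b - a = \<sigma> i * W" unfolding a_def b_def W_def rng_def using sigma_pos[of i] by simp
  have ab: "a < b" using ba Ws s_pos sigma_pos[of i] by (simp add: algebra_simps)
  have aS: "a \<in> c i ` S" using fin neS a_def by simp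
  have bS: "b \<in> c i ` S" using fin neS b_def by simp
  have rngS: "a \<le> c i m \<and> c i m \<le> b" if "m \<in> S" for m using that fin a_def b_def by simp
  obtain \<theta> where th: "a < \<theta>" "\<theta> < b" "\<forall>m\<in>S. c i m \<noteq> \<theta>"
    "(\<Sum>m\<in>S. 1/(c i m - \<theta>)^2) \<le> 20 * (real (card S) - 1) * (3 * real (card S) - 2) / (b - a)^2"
    using theta_exists[OF fin _ aS bS ab] rngS by blast
  have "(\<Sum>m\<in>S. (\<sigma> i)^2 / (mu m $ i - \<theta>)^2) = (\<sigma> i)^2 * (\<Sum>m\<in>S. 1/(c i m - \<theta>)^2)"
    by (simp add: sum_distrib_left c_def)
  also have "\<dots> \<le> (\<sigma> i)^2 * (20 * (real (card S) - 1) * (3 * real (card S) - 2) / (b - a)^2)"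
    using th(4) by (intro mult_left_mono) auto
  also have "\<dots> = 20 * (real (card S) - 1) * (3 * real (card S) - 2) / W^2"
    unfolding ba using sigma_pos[of i] by (simp add: power_mult_distrib)
  finally have sumb: "(\<Sum>m\<in>S. (\<sigma> i)^2 / (mu m $ i - \<theta>)^2) \<le> 20 * (real (card S) - 1) * (3 * real (card S) - 2) / W^2" .
  have "\<exists>k\<in>S. mu k $ i < \<theta>" using aS th(1) c_def by auto
  moreover have "\<exists>k\<in>S. \<theta> < mu k $ i" using bS th(2) c_def by auto
  moreover have "\<forall>k\<in>S. mu k $ i \<noteq> \<theta>" using th(3) c_def by auto
  ultimately show ?thesis using Ws bnd sumb by blast
qed

lemma good_node:
  assumes fin: "finite S" and sub: "S \<subseteq> {..<K}"
    and Ws: "W \<ge> s" and bnd: "\<forall>j. \<forall>k\<in>S. \<forall>l\<in>S. \<bar>mu k $ j - mu l $ j\<bar> \<le> \<sigma> j * W"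
    and neq: "\<forall>k\<in>S. mu k $ i \<noteq> \<theta>"
    and sumb: "(\<Sum>k\<in>S. (\<sigma> i)^2 / (mu k $ i - \<theta>)^2) \<le> 20 * (real (card S) - 1) * (3 * real (card S) - 2) / W^2"
    and SL: "SL = {k\<in>S. mu k $ i < \<theta>}" and SR: "SR = {k\<in>S. \<theta> < mu k $ i}"
    and neL: "SL \<noteq> {}" and neR: "SR \<noteq> {}"
    and gL: "good SL TL csL EL" and gR: "good SR TR csR ER"
  shows "\<exists>E. good S (Node i \<theta> TL TR) (csL @ csR) E"
proof -
  define Ssig where "Ssig = (\<Sum>j\<in>UNIV. \<sigma> j)"
  have Ssig_pos: "Ssig > 0" unfolding Ssig_def using sigma_pos by (intro sum_pos) auto
  have W0: "W > 0" using Ws s_pos by simp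
  define w where "w = W * Ssig"
  have w0: "w \<ge> 0" using W0 Ssig_pos w_def by simp
  define HL where "HL = {x::real^'d. x $ i \<le> \<theta>}"
  define HR where "HR = {x::real^'d. \<theta> < x $ i}"
  have HLb: "HL \<in> sets borel" unfolding HL_def by (rule halfspace_le_borel)
  have HRb: "HR \<in> sets borel" unfolding HR_def by (rule halfspace_gt_borel)
  define E where "E = (\<lambda>k. if k \<in> SL then (\<lambda>x. EL k x + indicator HR x * w) else (\<lambda>x. ER k x + indicator HL x * w))"
  have Sun: "S = SL \<union> SR" using SL SR neq by auto
  have Sdis: "SL \<inter> SR = {}" using SL SR by auto
  have finL: "finite SL" and finR: "finite SR" using fin SL SR by auto
  have cardS: "card S = card SL + card SR" using Sun Sdis finL finR by (simp add: card_Un_disjoint)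
  have subL: "SL \<subseteq> S" and subR: "SR \<subseteq> S" using Sun by auto
  note gLd = gL[unfolded good_def] and gRd = gR[unfolded good_def]
  have lenL: "length csL = length (leaf_regions TL)" using gLd by simp
  define T where "T = Node i \<theta> TL TR"
  have CN: "Ccost T (csL @ csR) x = (if x $ i \<le> \<theta> then Ccost TL csL x else Ccost TR csR x)" for x
    unfolding T_def by (rule Ccost_Node[OF lenL])
  have P1: "length (leaf_regions T) = card S" using gLd gRd cardS T_def by simp
  have P2: "length (csL @ csR) = card S" using gLd gRd cardS by simp
  have P3: "\<forall>A\<in>set (leaf_regions T). card {k\<in>S. mu k \<in> A} = 1"
  proof
    fix A assume "A \<in> set (leaf_regions T)"
    then have "(\<exists>A'\<in>set (leaf_regions TL). A = A' \<inter> HL) \<or> (\<exists>A'\<in>set (leaf_regions TR). A = A' \<inter> HR)"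
      unfolding T_def HL_def HR_def by auto
    then show "card {k\<in>S. mu k \<in> A} = 1"
    proof
      assume "\<exists>A'\<in>set (leaf_regions TL). A = A' \<inter> HL"
      then obtain A' where A': "A' \<in> set (leaf_regions TL)" "A = A' \<inter> HL" by blast
      have "{k\<in>S. mu k \<in> A} = {k\<in>SL. mu k \<in> A'}"
        using A'(2) SL neq unfolding HL_def by force
      then show ?thesis using gLd A'(1) by simp
    next
      assume "\<exists>A'\<in>set (leaf_regions TR). A = A' \<inter> HR"
      then obtain A' where A': "A' \<in> set (leaf_regions TR)" "A = A' \<inter> HR" by blast
      have "{k\<in>S. mu k \<in> A} = {k\<in>SR. mu k \<in> A'}"
        using A'(2) SR neq unfolding HR_def by force
      then show ?thesis using gRd A'(1) by simp
    qed
  qed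
  have P4: "\<forall>x. \<exists>c\<in>set (csL @ csR). Ccost T (csL @ csR) x = l1dist x c"
  proof
    fix x
    show "\<exists>c\<in>set (csL @ csR). Ccost T (csL @ csR) x = l1dist x c"
    proof (cases "x $ i \<le> \<theta>")
      case True
      then obtain c where "c \<in> set csL" "Ccost TL csL x = l1dist x c" using gLd by blast
      then show ?thesis using CN True by auto
    next
      case False
      then obtain c where "c \<in> set csR" "Ccost TR csR x = l1dist x c" using gRd by blast
      then show ?thesis using CN False by auto
    qed
  qed
  have P5: "set (csL @ csR) \<subseteq> mu ` S"
  proof -
    have "set csL \<subseteq> mu ` SL" "set csR \<subseteq> mu ` SR" using gLd gRd by auto
    moreover have "mu ` SL \<subseteq> mu ` S" "mu ` SR \<subseteq> mu ` S" using subL subR by auto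
    ultimately show ?thesis by auto
  qed
  have l1w: "l1dist (mu k) (mu l) \<le> w" if "k \<in> S" "l \<in> S" for k l
  proof -
    have "l1dist (mu k) (mu l) \<le> (\<Sum>j\<in>UNIV. \<sigma> j * W)"
      unfolding l1dist_def using bnd that by (intro sum_mono) auto
    also have "\<dots> = w" unfolding w_def Ssig_def by (simp add: sum_distrib_left mult.commute)
    finally show ?thesis .
  qed
  have other: "Ccost TR csR x \<le> l1dist x (mu k) + w" if "k \<in> S" for k x
  proof -
    obtain c where c: "c \<in> set csR" "Ccost TR csR x = l1dist x c" using gRd by blast
    then obtain l where l: "l \<in> SR" "c = mu l" using gRd by blast
    have "l1dist x c \<le> l1dist x (mu k) + l1dist (mu k) c" by (rule l1dist_triangle)
    then show ?thesis using c l l1w[OF that, of l] subR by auto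
  qed
  have other2: "Ccost TL csL x \<le> l1dist x (mu k) + w" if "k \<in> S" for k x
  proof -
    obtain c where c: "c \<in> set csL" "Ccost TL csL x = l1dist x c" using gLd by blast
    then obtain l where l: "l \<in> SL" "c = mu l" using gLd by blast
    have "l1dist x c \<le> l1dist x (mu k) + l1dist (mu k) c" by (rule l1dist_triangle)
    then show ?thesis using c l l1w[OF that, of l] subL by auto
  qed
  have P6: "\<forall>k\<in>S. E k \<in> borel_measurable borel \<and> (\<forall>x. 0 \<le> E k x) \<and> integrable (nu k) (E k) \<and>
        (\<forall>x. Ccost T (csL @ csR) x \<le> l1dist x (mu k) + E k x)"
  proof
    fix k assume kS: "k \<in> S"
    have kK: "k < K" using kS sub by auto
    show "E k \<in> borel_measurable borel \<and> (\<forall>x. 0 \<le> E k x) \<and> integrable (nu k) (E k) \<and>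
        (\<forall>x. Ccost T (csL @ csR) x \<le> l1dist x (mu k) + E k x)"
    proof (cases "k \<in> SL")
      case True
      have Ek: "E k = (\<lambda>x. EL k x + indicator HR x * w)" using True E_def by simp
      have m: "EL k \<in> borel_measurable borel" "\<forall>x. 0 \<le> EL k x" "integrable (nu k) (EL k)"
        "\<forall>x. Ccost TL csL x \<le> l1dist x (mu k) + EL k x" using gLd True by auto
      have meas: "E k \<in> borel_measurable borel" unfolding Ek
        using m(1) HRb by (intro borel_measurable_add borel_measurable_times borel_measurable_indicator borel_measurable_const) auto
      have nn: "\<forall>x. 0 \<le> E k x" unfolding Ek using m(2) w0 by (simp add: indicator_def)
      have int: "integrable (nu k) (E k)" unfolding Ek
        using m(3) ind_int(1)[OF prob[OF kK] sets_nu[OF kK] HRb] by (intro Bochner_Integration.integrable_add)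
      have pw: "\<forall>x. Ccost T (csL @ csR) x \<le> l1dist x (mu k) + E k x"
      proof
        fix x
        show "Ccost T (csL @ csR) x \<le> l1dist x (mu k) + E k x"
        proof (cases "x $ i \<le> \<theta>")
          case True
          then show ?thesis using CN m(4) Ek HR_def by simp
        next
          case False
          then have "x \<in> HR" using HR_def by simp
          moreover have "0 \<le> EL k x" using m(2) by simp
          ultimately show ?thesis using CN False other[OF kS, of x] Ek by simp
        qed
      qed
      show ?thesis using meas nn int pw by blast
    next
      case False
      then have kR: "k \<in> SR" using kS Sun by auto
      have Ek: "E k = (\<lambda>x. ER k x + indicator HL x * w)" using False E_def by simp
      have m: "ER k \<in> borel_measurable borel" "\<forall>x. 0 \<le> ER k x" "integrable (nu k) (ER k)"
        "\<forall>x. Ccost TR csR x \<le> l1dist x (mu k) + ER k x" using gRd kR by auto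
      have meas: "E k \<in> borel_measurable borel" unfolding Ek
        using m(1) HLb by (intro borel_measurable_add borel_measurable_times borel_measurable_indicator borel_measurable_const) auto
      have nn: "\<forall>x. 0 \<le> E k x" unfolding Ek using m(2) w0 by (simp add: indicator_def)
      have int: "integrable (nu k) (E k)" unfolding Ek
        using m(3) ind_int(1)[OF prob[OF kK] sets_nu[OF kK] HLb] by (intro Bochner_Integration.integrable_add)
      have pw: "\<forall>x. Ccost T (csL @ csR) x \<le> l1dist x (mu k) + E k x"
      proof
        fix x
        show "Ccost T (csL @ csR) x \<le> l1dist x (mu k) + E k x"
        proof (cases "x $ i \<le> \<theta>")
          case True
          then have "x \<in> HL" using HL_def by simp
          moreover have "0 \<le> ER k x" using m(2) by simp
          ultimately show ?thesis using CN True other2[OF kS, of x] Ek by simp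
        next
          case False
          then show ?thesis using CN m(4) Ek HL_def by simp
        qed
      qed
      show ?thesis using meas nn int pw by blast
    qed
  qed
  define g where "g = (\<lambda>k. w / 2 * ((\<sigma> i)^2 / (mu k $ i - \<theta>)^2))"
  have sumL: "(\<Sum>k\<in>SL. \<integral>x. E k x \<partial>nu k) \<le> (\<Sum>k\<in>SL. \<integral>x. EL k x \<partial>nu k) + (\<Sum>k\<in>SL. g k)"
  proof -
    have "(\<integral>x. E k x \<partial>nu k) \<le> (\<integral>x. EL k x \<partial>nu k) + g k" if kL: "k \<in> SL" for k
    proof -
      have kK: "k < K" using kL subL sub by auto
      have Ek: "E k = (\<lambda>x. EL k x + indicator HR x * w)" using kL E_def by simp
      have iEL: "integrable (nu k) (EL k)" using gLd kL by auto
      have "(\<integral>x. E k x \<partial>nu k) = (\<integral>x. EL k x \<partial>nu k) + (\<integral>x. indicator HR x * w \<partial>nu k)"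
        unfolding Ek using iEL ind_int(1)[OF prob[OF kK] sets_nu[OF kK] HRb]
        by (rule Bochner_Integration.integral_add)
      also have "(\<integral>x. indicator HR x * w \<partial>nu k) = measure (nu k) HR * w"
        by (rule ind_int(2)[OF prob[OF kK] sets_nu[OF kK] HRb])
      finally have eq: "(\<integral>x. E k x \<partial>nu k) = (\<integral>x. EL k x \<partial>nu k) + measure (nu k) HR * w" .
      define r where "r = \<theta> - mu k $ i"
      have r0: "r > 0" using kL SL r_def by simp
      have sub1: "HR \<subseteq> {x. r \<le> x $ i - mu k $ i}" unfolding HR_def r_def by auto
      have Bb: "{x::real^'d. r \<le> x $ i - mu k $ i} \<in> sets (nu k)"
      proof -
        have "{x::real^'d. r \<le> x $ i - mu k $ i} = (\<lambda>x. x $ i) -` {r + mu k $ i..} \<inter> space borel" by auto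
        then show ?thesis using measurable_sets[OF borel_measurable_nth[of i], of "{r + mu k $ i..}"] sets_nu[OF kK] by simp
      qed
      have "measure (nu k) HR \<le> measure (nu k) {x. r \<le> x $ i - mu k $ i}"
      proof -
        interpret P: prob_space "nu k" by (rule prob[OF kK])
        show ?thesis using P.finite_measure_mono[OF sub1 Bb] .
      qed
      also have "\<dots> \<le> (\<sigma> i)^2 / (2 * r^2)"
        by (rule sym_cheb(1)[OF prob[OF kK] sets_nu[OF kK] symmetric[OF kK] sq_int[OF kK] mean[OF kK] var[OF kK] r0])
      finally have "measure (nu k) HR * w \<le> (\<sigma> i)^2 / (2 * r^2) * w" using w0 by (intro mult_right_mono) auto
      also have "\<dots> = g k" unfolding g_def r_def by (simp add: power2_commute field_simps)
      finally show ?thesis using eq by simp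
    qed
    then show ?thesis by (simp add: sum.distrib[symmetric] sum_mono)
  qed
  have sumR: "(\<Sum>k\<in>SR. \<integral>x. E k x \<partial>nu k) \<le> (\<Sum>k\<in>SR. \<integral>x. ER k x \<partial>nu k) + (\<Sum>k\<in>SR. g k)"
  proof -
    have "(\<integral>x. E k x \<partial>nu k) \<le> (\<integral>x. ER k x \<partial>nu k) + g k" if kR: "k \<in> SR" for k
    proof -
      have kK: "k < K" using kR subR sub by auto
      have kL: "k \<notin> SL" using kR Sdis by auto
      have Ek: "E k = (\<lambda>x. ER k x + indicator HL x * w)" using kL E_def by simp
      have iER: "integrable (nu k) (ER k)" using gRd kR by auto
      have "(\<integral>x. E k x \<partial>nu k) = (\<integral>x. ER k x \<partial>nu k) + (\<integral>x. indicator HL x * w \<partial>nu k)"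
        unfolding Ek using iER ind_int(1)[OF prob[OF kK] sets_nu[OF kK] HLb]
        by (rule Bochner_Integration.integral_add)
      also have "(\<integral>x. indicator HL x * w \<partial>nu k) = measure (nu k) HL * w"
        by (rule ind_int(2)[OF prob[OF kK] sets_nu[OF kK] HLb])
      finally have eq: "(\<integral>x. E k x \<partial>nu k) = (\<integral>x. ER k x \<partial>nu k) + measure (nu k) HL * w" .
      define r where "r = mu k $ i - \<theta>"
      have r0: "r > 0" using kR SR r_def by simp
      have sub1: "HL \<subseteq> {x. r \<le> mu k $ i - x $ i}" unfolding HL_def r_def by auto
      have Bb: "{x::real^'d. r \<le> mu k $ i - x $ i} \<in> sets (nu k)"
      proof -
        have "{x::real^'d. r \<le> mu k $ i - x $ i} = (\<lambda>x. x $ i) -` {..mu k $ i - r} \<inter> space borel" by auto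
        then show ?thesis using measurable_sets[OF borel_measurable_nth[of i], of "{..mu k $ i - r}"] sets_nu[OF kK] by simp
      qed
      have "measure (nu k) HL \<le> measure (nu k) {x. r \<le> mu k $ i - x $ i}"
      proof -
        interpret P: prob_space "nu k" by (rule prob[OF kK])
        show ?thesis using P.finite_measure_mono[OF sub1 Bb] .
      qed
      also have "\<dots> \<le> (\<sigma> i)^2 / (2 * r^2)"
        by (rule sym_cheb(2)[OF prob[OF kK] sets_nu[OF kK] symmetric[OF kK] sq_int[OF kK] mean[OF kK] var[OF kK] r0])
      finally have "measure (nu k) HL * w \<le> (\<sigma> i)^2 / (2 * r^2) * w" using w0 by (intro mult_right_mono) auto
      also have "\<dots> = g k" unfolding g_def r_def by (simp add: field_simps)
      finally show ?thesis using eq by simp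
    qed
    then show ?thesis by (simp add: sum.distrib[symmetric] sum_mono)
  qed
  define n where "n = real (card S)"
  have gS: "(\<Sum>k\<in>S. g k) \<le> 10 * (n - 1) * (3 * n - 2) * Ssig / s"
  proof -
    have "(\<Sum>k\<in>S. g k) = w / 2 * (\<Sum>k\<in>S. (\<sigma> i)^2 / (mu k $ i - \<theta>)^2)"
      unfolding g_def by (simp add: sum_distrib_left)
    also have "\<dots> \<le> w / 2 * (20 * (n - 1) * (3 * n - 2) / W^2)"
      using sumb w0 n_def by (intro mult_left_mono) auto
    also have "\<dots> = 10 * (n - 1) * (3 * n - 2) * Ssig / W"
      unfolding w_def using W0 by (simp add: field_simps power2_eq_square)
    also have "\<dots> \<le> 10 * (n - 1) * (3 * n - 2) * Ssig / s"
    proof (rule divide_left_mono)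
      have "card S \<ge> 2" using neL neR Sun cardS by (metis One_nat_def Suc_leI add_mono card_gt_0_iff finL finR one_add_one)
      then have "n \<ge> 2" using n_def by simp
      then show "0 \<le> 10 * (n - 1) * (3 * n - 2) * Ssig" using Ssig_pos by simp
    qed (use Ws s_pos in auto)
    finally show ?thesis .
  qed
  have IHL: "(\<Sum>k\<in>SL. \<integral>x. EL k x \<partial>nu k) \<le> 10 * real (card SL)^2 * (real (card SL) - 1) * Ssig / s"
    using gLd Ssig_def by simp
  have IHR: "(\<Sum>k\<in>SR. \<integral>x. ER k x \<partial>nu k) \<le> 10 * real (card SR)^2 * (real (card SR) - 1) * Ssig / s"
    using gRd Ssig_def by simp
  have a1: "card SL \<ge> 1" using neL finL by (simp add: Suc_leI card_gt_0_iff)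
  have b1: "card SR \<ge> 1" using neR finR by (simp add: Suc_leI card_gt_0_iff)
  have phi: "10 * real (card SL)^2 * (real (card SL) - 1) + 10 * real (card SR)^2 * (real (card SR) - 1)
        + 10 * (n - 1) * (3 * n - 2) \<le> 10 * n^2 * (n - 1)"
    using phi_ineq[OF a1 b1] cardS n_def by simp
  have "(\<Sum>k\<in>S. \<integral>x. E k x \<partial>nu k) = (\<Sum>k\<in>SL. \<integral>x. E k x \<partial>nu k) + (\<Sum>k\<in>SR. \<integral>x. E k x \<partial>nu k)"
    unfolding Sun using finL finR Sdis by (rule sum.union_disjoint)
  also have "\<dots> \<le> (\<Sum>k\<in>SL. \<integral>x. EL k x \<partial>nu k) + (\<Sum>k\<in>SR. \<integral>x. ER k x \<partial>nu k) + (\<Sum>k\<in>S. g k)"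
  proof -
    have "(\<Sum>k\<in>S. g k) = (\<Sum>k\<in>SL. g k) + (\<Sum>k\<in>SR. g k)"
      unfolding Sun using finL finR Sdis by (rule sum.union_disjoint)
    then show ?thesis using sumL sumR by linarith
  qed
  also have "\<dots> \<le> (10 * real (card SL)^2 * (real (card SL) - 1) + 10 * real (card SR)^2 * (real (card SR) - 1)
        + 10 * (n - 1) * (3 * n - 2)) * Ssig / s"
    using IHL IHR gS by (simp add: add_divide_distrib distrib_right)
  also have "\<dots> \<le> 10 * n^2 * (n - 1) * Ssig / s"
    using phi Ssig_pos s_pos by (intro divide_right_mono mult_right_mono) auto
  finally have P7: "(\<Sum>k\<in>S. \<integral>x. E k x \<partial>nu k) \<le> 10 * real (card S)^2 * (real (card S) - 1) * (\<Sum>j\<in>UNIV. \<sigma> j) / s"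
    using n_def Ssig_def by simp
  have "good S T (csL @ csR) E"
    unfolding good_def using P1 P2 P3 P4 P5 P6 P7 by blast
  then show ?thesis unfolding T_def by blast
qed

lemma build:
  "finite S \<Longrightarrow> S \<noteq> {} \<Longrightarrow> S \<subseteq> {..<K} \<Longrightarrow> \<exists>T cs E. good S T cs E"
proof (induction "card S" arbitrary: S rule: less_induct)
  case less
  show ?case
  proof (cases "card S = 1")
    case True
    then obtain k0 where S: "S = {k0}" by (auto simp: card_Suc_eq)
    then have "k0 < K" using less.prems by auto
    then show ?thesis using good_single S by blast
  next
    case False
    then have c2: "card S \<ge> 2" using less.prems by (metis One_nat_def Suc_1 Suc_leI card_gt_0_iff le_neq_implies_less less_Suc_eq_le not_le)
    obtain i \<theta> W where cut: "W \<ge> s" "\<forall>j. \<forall>k\<in>S. \<forall>l\<in>S. \<bar>mu k $ j - mu l $ j\<bar> \<le> \<sigma> j * W"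
      "\<exists>k\<in>S. mu k $ i < \<theta>" "\<exists>k\<in>S. \<theta> < mu k $ i" "\<forall>k\<in>S. mu k $ i \<noteq> \<theta>"
      "(\<Sum>k\<in>S. (\<sigma> i)^2 / (mu k $ i - \<theta>)^2) \<le> 20 * (real (card S) - 1) * (3 * real (card S) - 2) / W^2"
      using choose_cut[OF less.prems(1) less.prems(3) c2] by blast
    define SL where "SL = {k\<in>S. mu k $ i < \<theta>}"
    define SR where "SR = {k\<in>S. \<theta> < mu k $ i}"
    have neL: "SL \<noteq> {}" using cut(3) SL_def by auto
    have neR: "SR \<noteq> {}" using cut(4) SR_def by auto
    have finL: "finite SL" and finR: "finite SR" using less.prems SL_def SR_def by auto
    have Sun: "S = SL \<union> SR" using SL_def SR_def cut(5) by auto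
    have Sdis: "SL \<inter> SR = {}" using SL_def SR_def by auto
    have cardS: "card S = card SL + card SR" using Sun Sdis finL finR by (simp add: card_Un_disjoint)
    have cL: "card SL < card S" using cardS neR finR by (simp add: card_gt_0_iff)
    have cR: "card SR < card S" using cardS neL finL by (simp add: card_gt_0_iff)
    obtain TL csL EL where gL: "good SL TL csL EL"
      using less.hyps[OF cL finL neL] less.prems(3) SL_def by blast
    obtain TR csR ER where gR: "good SR TR csR ER"
      using less.hyps[OF cR finR neR] less.prems(3) SR_def by blast
    show ?thesis
      using good_node[OF less.prems(1) less.prems(3) cut(1) cut(2) cut(5) cut(6) SL_def SR_def neL neR gL gR]
      by blast
  qed
qed

lemma exists_tree:
  assumes K1: "K \<ge> 1"
  shows "\<exists>T cs E. length (leaf_regions T) = K \<and> length cs = K \<and>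
     (\<forall>A\<in>set (leaf_regions T). card {k. k < K \<and> mu k \<in> A} = 1) \<and>
     (\<forall>k<K. integrable (nu k) (E k) \<and> (\<forall>x. 0 \<le> E k x) \<and>
        (\<forall>x. Ccost T cs x \<le> l1dist x (mu k) + E k x)) \<and>
     (\<Sum>k<K. \<integral>x. E k x \<partial>nu k) \<le> 10 * real K^2 * (real K - 1) * (\<Sum>j\<in>UNIV. \<sigma> j) / s"
proof -
  have "0 \<in> {..<K}" using K1 by auto
  then have "{..<K} \<noteq> {}" by blast
  then obtain T cs E where g: "good {..<K} T cs E" using build[of "{..<K}"] by blast
  have eq: "{k. k < K \<and> mu k \<in> A} = {k\<in>{..<K}. mu k \<in> A}" for A by auto
  show ?thesis using g unfolding good_def eq by (intro exI[of _ T] exI[of _ cs] exI[of _ E]) auto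
qed

end

lemma ENR_props:
  fixes mu :: "nat \<Rightarrow> real ^ 'd" and \<sigma> :: "'d \<Rightarrow> real"
  assumes K2: "K \<ge> 2" and sp: "\<And>j. \<sigma> j > 0"
    and dm: "\<And>k l. k < K \<Longrightarrow> l < K \<Longrightarrow> k \<noteq> l \<Longrightarrow> mu k \<noteq> mu l"
  shows "ENR K mu \<sigma> > 0"
    "\<And>k l. k < K \<Longrightarrow> l < K \<Longrightarrow> k \<noteq> l \<Longrightarrow> \<exists>j. sqrt (ENR K mu \<sigma>) * \<sigma> j \<le> \<bar>mu k $ j - mu l $ j\<bar>"
proof -
  define P where "P = {(k, l). k < K \<and> l < K \<and> k \<noteq> l}"
  define f where "f = (\<lambda>(k, l). Max ((\<lambda>j. (mu k $ j - mu l $ j)^2 / (\<sigma> j)^2) ` UNIV))"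
  have E: "ENR K mu \<sigma> = Min (f ` P)" unfolding ENR_def P_def f_def by simp
  have finP: "finite P"
  proof -
    have "P \<subseteq> {..<K} \<times> {..<K}" unfolding P_def by auto
    then show ?thesis by (rule finite_subset) auto
  qed
  have neP: "(0, 1) \<in> P" using K2 P_def by auto
  have fge: "(mu k $ j - mu l $ j)^2 / (\<sigma> j)^2 \<le> f (k, l)" for k l j
    unfolding f_def by simp
  have fattain: "\<exists>j. f (k, l) = (mu k $ j - mu l $ j)^2 / (\<sigma> j)^2" for k l
  proof -
    have "Max ((\<lambda>j. (mu k $ j - mu l $ j)^2 / (\<sigma> j)^2) ` UNIV) \<in> (\<lambda>j. (mu k $ j - mu l $ j)^2 / (\<sigma> j)^2) ` UNIV"
      by (rule Max_in) auto
    then obtain j where "Max ((\<lambda>j. (mu k $ j - mu l $ j)^2 / (\<sigma> j)^2) ` UNIV) = (mu k $ j - mu l $ j)^2 / (\<sigma> j)^2"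
      by blast
    then show ?thesis unfolding f_def by auto
  qed
  have fpos: "f (k, l) > 0" if "(k, l) \<in> P" for k l
  proof -
    have "mu k \<noteq> mu l" using that dm P_def by auto
    then obtain j where j: "mu k $ j \<noteq> mu l $ j" by (metis vec_eq_iff)
    then have "(mu k $ j - mu l $ j)^2 / (\<sigma> j)^2 > 0" using sp[of j] by simp
    then show ?thesis using fge[of k j l] by linarith
  qed
  have "Min (f ` P) \<in> f ` P" using finP neP by (intro Min_in) auto
  then obtain k l where kl: "(k, l) \<in> P" "Min (f ` P) = f (k, l)" by auto
  show "ENR K mu \<sigma> > 0" using E kl fpos by simp
  fix k l assume kl: "k < K" "l < K" "k \<noteq> l"
  then have "(k, l) \<in> P" using P_def by simp
  then have le: "ENR K mu \<sigma> \<le> f (k, l)" unfolding E using finP by simp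
  obtain j where j: "f (k, l) = (mu k $ j - mu l $ j)^2 / (\<sigma> j)^2" using fattain by blast
  have "sqrt (ENR K mu \<sigma>) \<le> sqrt ((mu k $ j - mu l $ j)^2 / (\<sigma> j)^2)" using le j by simp
  also have "\<dots> = \<bar>mu k $ j - mu l $ j\<bar> / \<sigma> j" using sp[of j] by (simp add: real_sqrt_divide)
  finally have "sqrt (ENR K mu \<sigma>) * \<sigma> j \<le> \<bar>mu k $ j - mu l $ j\<bar>" using sp[of j] by (simp add: field_simps)
  then show "\<exists>j. sqrt (ENR K mu \<sigma>) * \<sigma> j \<le> \<bar>mu k $ j - mu l $ j\<bar>" by blast
qed

lemma ind_l1_int:
  assumes "prob_space N" "sets N = sets borel" "\<And>j. integrable N (\<lambda>x::real^'d. x $ j)" "A \<in> sets borel"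
  shows "integrable N (\<lambda>x. indicator A x * l1dist x c)"
proof -
  have "integrable N (\<lambda>x. l1dist x c)" by (rule l1dist_int[OF assms(1-3)])
  moreover have "A \<in> sets N" using assms by simp
  ultimately show ?thesis using integrable_mult_indicator[of A N "\<lambda>x. l1dist x c"] by simp
qed

theorem theorem3:
  fixes K :: nat and p :: "nat \<Rightarrow> real" and nu :: "nat \<Rightarrow> (real ^ 'd) measure"
    and mu :: "nat \<Rightarrow> real ^ 'd" and \<sigma> :: "'d \<Rightarrow> real"
    and \<alpha> \<beta> :: real
  assumes p_nonneg: "\<And>k. k < K \<Longrightarrow> p k \<ge> 0"
    and p_sum: "(\<Sum>k<K. p k) = 1"
    and alpha: "\<alpha> \<ge> 1"
    and p_bound: "\<And>k. k < K \<Longrightarrow> p k \<le> \<alpha> / real K"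
    and prob: "\<And>k. k < K \<Longrightarrow> prob_space (nu k)"
    and sets_nu: "\<And>k. k < K \<Longrightarrow> sets (nu k) = sets borel"
    and disc_or_ac: "\<And>k. k < K \<Longrightarrow>
          (\<exists>S. countable S \<and> (AE x in nu k. x \<in> S)) \<or> absolutely_continuous lborel (nu k)"
    and symmetric: "\<And>k. k < K \<Longrightarrow> distr (nu k) borel (\<lambda>x. 2 *\<^sub>R mu k - x) = nu k"
    and mean_int: "\<And>k j. k < K \<Longrightarrow> integrable (nu k) (\<lambda>x. x $ j)"
    and mean: "\<And>k j. k < K \<Longrightarrow> (\<integral>x. x $ j \<partial>nu k) = mu k $ j"
    and sq_int: "\<And>k j. k < K \<Longrightarrow> integrable (nu k) (\<lambda>x. (x $ j)^2)"
    and var: "\<And>k j. k < K \<Longrightarrow> (\<integral>x. (x $ j - mu k $ j)^2 \<partial>nu k) = (\<sigma> j)^2"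
    and sigma_pos: "\<And>j. \<sigma> j > 0"
    and distinct_means: "\<And>k l. k < K \<Longrightarrow> l < K \<Longrightarrow> k \<noteq> l \<Longrightarrow> mu k \<noteq> mu l"
    and beta: "\<And>i. \<beta> * mix_exp K p nu mu (\<lambda>x m. \<bar>x $ i - m $ i\<bar>)
                  \<ge> sqrt (mix_exp K p nu mu (\<lambda>x m. \<bar>x $ i - m $ i\<bar>^2))"
  shows "\<exists>T. is_decision_tree K mu T \<and>
           (\<forall>med. (\<forall>t < length (leaf_regions T).
                      is_leaf_median K p nu (leaf_regions T ! t) (med t)) \<longrightarrow>
              price K p nu mu T med
                \<le> 1 + (4 + 2 * pi^2 / 3) * \<alpha> * \<beta> * real K * (real K - 1)
                      / sqrt (ENR K mu \<sigma>))"
proof -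
  have K1: "K \<ge> 1"
  proof (rule ccontr)
    assume "\<not> K \<ge> 1"
    then have "K = 0" by simp
    then show False using p_sum by simp
  qed
  define s where "s = (if K \<ge> 2 then sqrt (ENR K mu \<sigma>) else 1)"
  have s_pos: "s > 0" using ENR_props(1)[OF _ sigma_pos distinct_means] s_def by auto
  have sep: "\<exists>j. s * \<sigma> j \<le> \<bar>mu k $ j - mu l $ j\<bar>" if "k < K" "l < K" "k \<noteq> l" for k l
  proof -
    have "K \<ge> 2" using that by linarith
    then show ?thesis using ENR_props(2)[OF _ sigma_pos distinct_means that] s_def by simp
  qed
  obtain T cs E where T: "length (leaf_regions T) = K" "length cs = K"
     "\<forall>A\<in>set (leaf_regions T). card {k. k < K \<and> mu k \<in> A} = 1"
     "\<forall>k<K. integrable (nu k) (E k) \<and> (\<forall>x. 0 \<le> E k x) \<and> (\<forall>x. Ccost T cs x \<le> l1dist x (mu k) + E k x)"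
     "(\<Sum>k<K. \<integral>x. E k x \<partial>nu k) \<le> 10 * real K^2 * (real K - 1) * (\<Sum>j\<in>UNIV. \<sigma> j) / s"
    using exists_tree[where K=K and nu=nu and mu=mu and \<sigma>=\<sigma> and s=s, OF prob sets_nu symmetric mean_int mean sq_int var sigma_pos s_pos sep K1]
    by blast
  define Ssig where "Ssig = (\<Sum>j\<in>UNIV. \<sigma> j)"
  have Ssig_pos: "Ssig > 0" unfolding Ssig_def using sigma_pos by (intro sum_pos) auto
  define D where "D = mix_exp K p nu mu l1dist"
  define Ei where "Ei = (\<lambda>i. mix_exp K p nu mu (\<lambda>x m. \<bar>x $ i - m $ i\<bar>))"
  have absint: "integrable (nu k) (\<lambda>x. \<bar>x $ i - c $ i\<bar>)" if "k < K" for k i and c :: "real ^ 'd"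
  proof -
    interpret P: prob_space "nu k" by (rule prob[OF that])
    show ?thesis using mean_int[OF that, of i]
      by (intro integrable_abs Bochner_Integration.integrable_diff P.integrable_const) auto
  qed
  have D_eq: "D = (\<Sum>i\<in>UNIV. Ei i)"
  proof -
    have "D = (\<Sum>k<K. p k * (\<Sum>i\<in>UNIV. \<integral>x. \<bar>x $ i - mu k $ i\<bar> \<partial>nu k))"
      unfolding D_def mix_exp_def l1dist_def
      by (intro sum.cong refl arg_cong2[where f="(*)"] Bochner_Integration.integral_sum absint) auto
    also have "\<dots> = (\<Sum>i\<in>UNIV. \<Sum>k<K. p k * (\<integral>x. \<bar>x $ i - mu k $ i\<bar> \<partial>nu k))"
      by (simp add: sum_distrib_left sum.swap[of _ "{..<K}"])
    also have "\<dots> = (\<Sum>i\<in>UNIV. Ei i)" unfolding Ei_def mix_exp_def by simp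
    finally show ?thesis .
  qed
  have Ei_nn: "Ei i \<ge> 0" for i
    unfolding Ei_def mix_exp_def using p_nonneg by (intro sum_nonneg mult_nonneg_nonneg integral_nonneg) auto
  have Ei_ge: "\<beta> * Ei i \<ge> \<sigma> i" for i
  proof -
    have "mix_exp K p nu mu (\<lambda>x m. \<bar>x $ i - m $ i\<bar>^2) = (\<Sum>k<K. p k * (\<sigma> i)^2)"
      unfolding mix_exp_def using var by (intro sum.cong refl) simp
    also have "\<dots> = (\<sigma> i)^2" using p_sum by (simp add: sum_distrib_right[symmetric])
    finally have "sqrt (mix_exp K p nu mu (\<lambda>x m. \<bar>x $ i - m $ i\<bar>^2)) = \<sigma> i"
      using sigma_pos[of i] by simp
    then show ?thesis using beta[of i] Ei_def by simp
  qed
  have bD: "\<beta> * D \<ge> Ssig"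
  proof -
    have "\<beta> * D = (\<Sum>i\<in>UNIV. \<beta> * Ei i)" using D_eq by (simp add: sum_distrib_left)
    also have "\<dots> \<ge> Ssig" unfolding Ssig_def using Ei_ge by (intro sum_mono) auto
    finally show ?thesis .
  qed
  have D_nn: "D \<ge> 0" using D_eq Ei_nn by (simp add: sum_nonneg)
  have D0: "D > 0"
  proof (rule ccontr)
    assume "\<not> D > 0"
    then have "D = 0" using D_nn by simp
    then show False using bD Ssig_pos by simp
  qed
  have b0: "\<beta> > 0"
  proof (rule ccontr)
    assume "\<not> \<beta> > 0"
    then have "\<beta> * D \<le> 0" using D0 by (simp add: mult_nonpos_nonneg)
    then show False using bD Ssig_pos by simp
  qed
  define X where "X = 10 * \<alpha> * real K * (real K - 1) * Ssig / s"
  define L where "L = leaf_regions T"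
  have LK: "length L = K" using T(1) L_def by simp
  have Lb: "L ! t \<in> sets borel" if "t < K" for t
    using leaf_regions_borel[of "L ! t" T] that LK L_def by (metis nth_mem)
  have int1: "integrable (nu k) (\<lambda>x. indicator (L ! t) x * l1dist x c)" if "k < K" "t < K" for k t c
    by (rule ind_l1_int[OF prob[OF that(1)] sets_nu[OF that(1)] mean_int[OF that(1)] Lb[OF that(2)]])
  have intC: "integrable (nu k) (Ccost T cs)" if "k < K" for k
  proof -
    have "integrable (nu k) (\<lambda>x. \<Sum>t<K. indicator (L ! t) x * l1dist x (cs ! t))"
      using int1[OF that] by (intro Bochner_Integration.integrable_sum) auto
    then show ?thesis unfolding Ccost_def L_def[symmetric] LK by (simp add: fun_eq_iff)
  qed
  have intCeq: "(\<integral>x. Ccost T cs x \<partial>nu k) = (\<Sum>t<K. \<integral>x. indicator (L ! t) x * l1dist x (cs ! t) \<partial>nu k)"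
    if "k < K" for k
    unfolding Ccost_def L_def[symmetric] LK using int1[OF that]
    by (intro Bochner_Integration.integral_sum) auto
  have PE: "(\<Sum>k<K. p k * (\<integral>x. E k x \<partial>nu k)) \<le> X"
  proof -
    have "(\<Sum>k<K. p k * (\<integral>x. E k x \<partial>nu k)) \<le> (\<Sum>k<K. \<alpha> / real K * (\<integral>x. E k x \<partial>nu k))"
    proof (intro sum_mono mult_right_mono)
      fix k assume "k \<in> {..<K}"
      then have k: "k < K" by simp
      show "p k \<le> \<alpha> / real K" by (rule p_bound[OF k])
      show "0 \<le> (\<integral>x. E k x \<partial>nu k)" using T(4) k by (intro integral_nonneg_AE) auto
    qed
    also have "\<dots> = \<alpha> / real K * (\<Sum>k<K. \<integral>x. E k x \<partial>nu k)" by (simp add: sum_distrib_left)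
    also have "\<dots> \<le> \<alpha> / real K * (10 * real K^2 * (real K - 1) * Ssig / s)"
      using T(5) alpha Ssig_def by (intro mult_left_mono) auto
    also have "\<dots> = X"
    proof -
      have Kp: "real K \<noteq> 0" using K1 by simp
      show ?thesis unfolding X_def using Kp s_pos by (simp add: power2_eq_square field_simps)
    qed
    finally show ?thesis .
  qed
  show ?thesis
  proof (intro exI[of _ T] conjI allI impI)
    show "is_decision_tree K mu T" unfolding is_decision_tree_def using T(1,3) by simp
    fix med
    assume med: "\<forall>t<length (leaf_regions T). is_leaf_median K p nu (leaf_regions T ! t) (med t)"
    define Num where "Num = (\<Sum>k<K. p k * (\<integral>x. (\<Sum>t<K. indicator (L ! t) x * l1dist x (med t)) \<partial>nu k))"
    have pr: "price K p nu mu T med = Num / D" unfolding price_def Num_def D_def L_def[symmetric] LK ..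
    have "Num = (\<Sum>k<K. p k * (\<Sum>t<K. \<integral>x. indicator (L ! t) x * l1dist x (med t) \<partial>nu k))"
      unfolding Num_def using int1 by (intro sum.cong refl arg_cong2[where f="(*)"] Bochner_Integration.integral_sum) auto
    also have "\<dots> = (\<Sum>t<K. \<Sum>k<K. p k * (\<integral>x. indicator (L ! t) x * l1dist x (med t) \<partial>nu k))"
      unfolding sum_distrib_left by (rule sum.swap)
    also have "\<dots> \<le> (\<Sum>t<K. \<Sum>k<K. p k * (\<integral>x. indicator (L ! t) x * l1dist x (cs ! t) \<partial>nu k))"
    proof (rule sum_mono)
      fix t assume "t \<in> {..<K}"
      then have "is_leaf_median K p nu (L ! t) (med t)" using med LK L_def by simp
      then show "(\<Sum>k<K. p k * (\<integral>x. indicator (L ! t) x * l1dist x (med t) \<partial>nu k))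
          \<le> (\<Sum>k<K. p k * (\<integral>x. indicator (L ! t) x * l1dist x (cs ! t) \<partial>nu k))"
        unfolding is_leaf_median_def by blast
    qed
    also have "\<dots> = (\<Sum>k<K. \<Sum>t<K. p k * (\<integral>x. indicator (L ! t) x * l1dist x (cs ! t) \<partial>nu k))"
      by (rule sum.swap)
    also have "\<dots> = (\<Sum>k<K. p k * (\<integral>x. Ccost T cs x \<partial>nu k))"
      using intCeq by (simp add: sum_distrib_left)
    also have "\<dots> \<le> (\<Sum>k<K. p k * ((\<integral>x. l1dist x (mu k) \<partial>nu k) + (\<integral>x. E k x \<partial>nu k)))"
    proof (intro sum_mono mult_left_mono)
      fix k assume "k \<in> {..<K}"
      then have k: "k < K" by simp
      show "0 \<le> p k" by (rule p_nonneg[OF k])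
      have il: "integrable (nu k) (\<lambda>x. l1dist x (mu k))" by (rule l1dist_int[OF prob[OF k] sets_nu[OF k] mean_int[OF k]])
      have iE: "integrable (nu k) (E k)" using T(4) k by simp
      have "(\<integral>x. Ccost T cs x \<partial>nu k) \<le> (\<integral>x. l1dist x (mu k) + E k x \<partial>nu k)"
        using intC[OF k] il iE T(4) k by (intro integral_mono Bochner_Integration.integrable_add) auto
      also have "\<dots> = (\<integral>x. l1dist x (mu k) \<partial>nu k) + (\<integral>x. E k x \<partial>nu k)"
        using il iE by (rule Bochner_Integration.integral_add)
      finally show "(\<integral>x. Ccost T cs x \<partial>nu k) \<le> (\<integral>x. l1dist x (mu k) \<partial>nu k) + (\<integral>x. E k x \<partial>nu k)" .
    qed
    also have "\<dots> = D + (\<Sum>k<K. p k * (\<integral>x. E k x \<partial>nu k))"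
      unfolding D_def mix_exp_def by (simp add: distrib_left sum.distrib)
    also have "\<dots> \<le> D + X" using PE by simp
    finally have NumD: "Num \<le> D + X" .
    have "Num / D \<le> (D + X) / D" using NumD D0 by (intro divide_right_mono) auto
    also have "\<dots> = 1 + X / D" using D0 by (simp add: field_simps)
    finally have p1: "price K p nu mu T med \<le> 1 + X / D" using pr by simp
    have XD: "X / D \<le> 10 * \<alpha> * real K * (real K - 1) / s * \<beta>"
    proof -
      have cnn: "10 * \<alpha> * real K * (real K - 1) / s \<ge> 0" using alpha K1 s_pos by simp
      have "Ssig / D \<le> \<beta>" using bD D0 by (simp add: divide_le_eq mult.commute)
      then have "10 * \<alpha> * real K * (real K - 1) / s * (Ssig / D) \<le> 10 * \<alpha> * real K * (real K - 1) / s * \<beta>"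
        using cnn by (intro mult_left_mono) auto
      moreover have "X / D = 10 * \<alpha> * real K * (real K - 1) / s * (Ssig / D)" unfolding X_def by simp
      ultimately show ?thesis by simp
    qed
    have fin: "10 * \<alpha> * real K * (real K - 1) / s * \<beta>
        \<le> (4 + 2 * pi^2 / 3) * \<alpha> * \<beta> * real K * (real K - 1) / sqrt (ENR K mu \<sigma>)"
    proof (cases "K \<ge> 2")
      case False
      then have "K = 1" using K1 by simp
      then show ?thesis by simp
    next
      case True
      then have ss: "s = sqrt (ENR K mu \<sigma>)" using s_def by simp
      have Z: "\<alpha> * \<beta> * real K * (real K - 1) / s \<ge> 0" using alpha b0 K1 s_pos by simp
      have "pi^2 \<ge> 3^2" using pi_gt3 by (intro power_mono) auto
      then have c10: "10 \<le> 4 + 2 * pi^2 / 3" by simp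
      have "10 * \<alpha> * real K * (real K - 1) / s * \<beta> = 10 * (\<alpha> * \<beta> * real K * (real K - 1) / s)"
        by (simp add: field_simps)
      also have "\<dots> \<le> (4 + 2 * pi^2 / 3) * (\<alpha> * \<beta> * real K * (real K - 1) / s)"
        using c10 Z by (intro mult_right_mono) auto
      also have "\<dots> = (4 + 2 * pi^2 / 3) * \<alpha> * \<beta> * real K * (real K - 1) / sqrt (ENR K mu \<sigma>)"
        unfolding ss by (simp add: field_simps)
      finally show ?thesis .
    qed
    show "price K p nu mu T med \<le> 1 + (4 + 2 * pi^2 / 3) * \<alpha> * \<beta> * real K * (real K - 1) / sqrt (ENR K mu \<sigma>)"
      using p1 XD fin by linarith
  qed
qed

end
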